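(* Let $\{\mathcal G,(\Gamma_0,\Gamma_1),(\widetilde\Gamma_0,\widetilde\Gamma_1)\}$ be a triple for the adjoint pair $\{S,\widetilde S\}$ satisfying (G), (D), (M), with $\rho(A_0)\neq\emptyset$, $\gamma$-fields $\gamma,\widetilde\gamma$ and Weyl function $M$. Let $B_1,B_2$ be closable operators in $\mathcal G$ and suppose that for some $\lambda_0\in\rho(A_0)$ the operator $M(\lambda_0)B_1$ is closable and: (i) $1\in\rho(B_2\overline{M(\lambda_0)B_1})$; (ii) $\operatorname{ran}(B_2\overline{M(\lambda_0)B_1})\subset\operatorname{ran}\Gamma_0\cap\operatorname{dom}B_1$; (iii) $\operatorname{ran}(B_1\upharpoonright\operatorname{ran}\Gamma_0)\subset\operatorname{ran}\Gamma_0$; (iv) $\operatorname{ran}(B_2\upharpoonright\operatorname{ran}\Gamma_1)\subset\operatorname{ran}\Gamma_0$; (v) $\operatorname{ran}(\Gamma_1\upharpoonright\ker\Gamma_0)\subset\operatorname{dom}(B_1B_2)$. Then $A_{B_1B_2}$ is a closed operator with $\lambda_0\in\rho(A_{B_1B_2})$, and for all $\lambda\in\rho(A_0)\cap\rho(A_{B_1B_2})$ $(A_{B_1B_2}-\lambda)^{-1}=(A_0-\lambda)^{-1}+\gamma(\lambda)B_1(I-B_2M(\lambda)B_1)^{-1}B_2\widetilde\gamma(\overline\lambda)^*$.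
   Context: Let $\mathfrak H$ be a separable Hilbert space. An adjoint pair $\{S,\widetilde S\}$ consists of densely defined closed operators $S,\widetilde S$ in $\mathfrak H$ with $(Sf,g)=(f,\widetilde Sg)$ for all $f\in\operatorname{dom}S$, $g\in\operatorname{dom}\widetilde S$. Fix operators $T\subset S^*$ and $\widetilde T\subset\widetilde S^*$ which are cores, i.e. $\overline T=S^*$ and $\overline{\widetilde T}=\widetilde S^*$. A triple $\{\mathcal G,(\Gamma_0,\Gamma_1),(\widetilde\Gamma_0,\widetilde\Gamma_1)\}$ for $\{S,\widetilde S\}$ consists of a Hilbert space $\mathcal G$ and linear maps $\Gamma_0,\Gamma_1:\operatorname{dom}T\to\mathcal G$, $\widetilde\Gamma_0,\widetilde\Gamma_1:\operatorname{dom}\widetilde T\to\mathcal G$. Put $A_0:=T\upharpoonright\ker\Gamma_0$ and $\widetilde A_0:=\widetilde T\upharpoonright\ker\widetilde\Gamma_0$. Conditions: (G) $(Tf,g)_{\mathfrak H}-(f,\widetilde Tg)_{\mathfrak H}=(\Gamma_1f,\widetilde\Gamma_0g)_{\mathcal G}-(\Gamma_0f,\widetilde\Gamma_1g)_{\mathcal G}$ for all $f\in\operatorname{dom}T$, $g\in\operatorname{dom}\widetilde T$; (D) $\operatorname{ran}\Gamma_0$ and $\operatorname{ran}\widetilde\Gamma_0$ are dense in $\mathcal G$; (M) $A_0^*=\widetilde A_0$ and $\widetilde A_0^*=A_0$. For $\lambda\in\rho(A_0)$ one has $\operatorname{dom}T=\ker\Gamma_0\dotplus\ker(T-\lambda)$,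 so $\Gamma_0\upharpoonright\ker(T-\lambda)$ is injective; similarly for $\widetilde T$. The $\gamma$-fields are $\gamma(\lambda):=(\Gamma_0\upharpoonright\ker(T-\lambda))^{-1}$, $\widetilde\gamma(\mu):=(\widetilde\Gamma_0\upharpoonright\ker(\widetilde T-\mu))^{-1}$; the Weyl function is $M(\lambda):=\Gamma_1\gamma(\lambda)$, $\lambda\in\rho(A_0)$. Products of operators have their natural domains, e.g. $\operatorname{dom}(B_1B_2)=\{\varphi\in\operatorname{dom}B_2:B_2\varphi\in\operatorname{dom}B_1\}$; $(I-B_2M(\lambda)B_1)^{-1}$ is the inverse of the injective operator $I-B_2M(\lambda)B_1$. For a (not necessarily closed) operator $C$ in $\mathcal G$, $1\in\rho(C)$ means $I-C$ is a bijection of $\operatorname{dom}C$ onto $\mathcal G$ with bounded inverse; similarly $\rho(A)$ for operators in $\mathfrak H$. Define $A_{B_1B_2}f:=Tf$ on $\operatorname{dom}A_{B_1B_2}:=\{f\in\operatorname{dom}T:\Gamma_1f\in\operatorname{dom}(B_1B_2),\ B_1B_2\Gamma_1f=\Gamma_0f\}$. *)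

theory Defs
  imports Complex_Main "HOL-Library.Countable_Set"
begin

text \<open>A complex Hilbert space
is represented by a carrier type 'a (an abelian group), a complex scalar multiplication sc
and an inner product ip (linear in the first, conjugate-linear in the second argument).\<close>

definition hnorm :: "('a \<Rightarrow> 'a \<Rightarrow> complex) \<Rightarrow> 'a \<Rightarrow> real" where
  "hnorm ip x = sqrt (Re (ip x x))"

definition hlim :: "('a::ab_group_add \<Rightarrow> 'a \<Rightarrow> complex) \<Rightarrow> (nat \<Rightarrow> 'a) \<Rightarrow> 'a \<Rightarrow> bool" where
  "hlim ip X x \<longleftrightarrow> (\<lambda>n. hnorm ip (X n - x)) \<longlonglongrightarrow> 0"

definition hcauchy :: "('a::ab_group_add \<Rightarrow> 'a \<Rightarrow> complex) \<Rightarrow> (nat \<Rightarrow> 'a) \<Rightarrow> bool" where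
  "hcauchy ip X \<longleftrightarrow> (\<forall>e>0. \<exists>N. \<forall>m\<ge>N. \<forall>n\<ge>N. hnorm ip (X m - X n) < e)"

definition hclosure :: "('a::ab_group_add \<Rightarrow> 'a \<Rightarrow> complex) \<Rightarrow> 'a set \<Rightarrow> 'a set" where
  "hclosure ip S = {x. \<exists>X. (\<forall>n. X n \<in> S) \<and> hlim ip X x}"

definition hdense :: "('a::ab_group_add \<Rightarrow> 'a \<Rightarrow> complex) \<Rightarrow> 'a set \<Rightarrow> bool" where
  "hdense ip S \<longleftrightarrow> hclosure ip S = UNIV"

definition hilbert_space ::
  "(complex \<Rightarrow> 'a::ab_group_add \<Rightarrow> 'a) \<Rightarrow> ('a \<Rightarrow> 'a \<Rightarrow> complex) \<Rightarrow> bool" where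
  "hilbert_space sc ip \<longleftrightarrow>
     Vector_Spaces.vector_space sc \<and>
     (\<forall>x y z. ip (x + y) z = ip x z + ip y z) \<and>
     (\<forall>c x y. ip (sc c x) y = c * ip x y) \<and>
     (\<forall>x y. ip y x = cnj (ip x y)) \<and>
     (\<forall>x. 0 \<le> Re (ip x x)) \<and>
     (\<forall>x. ip x x = 0 \<longrightarrow> x = 0) \<and>
     (\<forall>X. hcauchy ip X \<longrightarrow> (\<exists>x. hlim ip X x))"

definition separable :: "('a::ab_group_add \<Rightarrow> 'a \<Rightarrow> complex) \<Rightarrow> bool" where
  "separable ip \<longleftrightarrow> (\<exists>D. countable D \<and> hdense ip D)"

text \<open>(Unbounded) linear operators are represented by their graphs.\<close>

definition op_dom :: "('a \<times> 'b) set \<Rightarrow> 'a set" where "op_dom A = fst ` A"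
definition op_ran :: "('a \<times> 'b) set \<Rightarrow> 'b set" where "op_ran A = snd ` A"

definition is_graph :: "('a \<times> 'b) set \<Rightarrow> bool" where
  "is_graph A \<longleftrightarrow> (\<forall>x y z. (x, y) \<in> A \<and> (x, z) \<in> A \<longrightarrow> y = z)"

definition lin_op :: "(complex \<Rightarrow> 'a::ab_group_add \<Rightarrow> 'a) \<Rightarrow> (complex \<Rightarrow> 'b::ab_group_add \<Rightarrow> 'b)
    \<Rightarrow> ('a \<times> 'b) set \<Rightarrow> bool" where
  "lin_op sc1 sc2 A \<longleftrightarrow> is_graph A \<and> (0, 0) \<in> A \<and>
     (\<forall>x y u v. (x, y) \<in> A \<and> (u, v) \<in> A \<longrightarrow> (x + u, y + v) \<in> A) \<and>
     (\<forall>c x y. (x, y) \<in> A \<longrightarrow> (sc1 c x, sc2 c y) \<in> A)"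

definition lin_on :: "(complex \<Rightarrow> 'a::ab_group_add \<Rightarrow> 'a) \<Rightarrow> (complex \<Rightarrow> 'b::ab_group_add \<Rightarrow> 'b)
    \<Rightarrow> 'a set \<Rightarrow> ('a \<Rightarrow> 'b) \<Rightarrow> bool" where
  "lin_on sc1 sc2 D f \<longleftrightarrow> (\<forall>x\<in>D. \<forall>y\<in>D. f (x + y) = f x + f y) \<and>
     (\<forall>c. \<forall>x\<in>D. f (sc1 c x) = sc2 c (f x))"

definition op_closure :: "('a::ab_group_add \<Rightarrow> 'a \<Rightarrow> complex) \<Rightarrow> ('b::ab_group_add \<Rightarrow> 'b \<Rightarrow> complex)
    \<Rightarrow> ('a \<times> 'b) set \<Rightarrow> ('a \<times> 'b) set" where
  "op_closure ip1 ip2 A = {(x, y). \<exists>X Y. (\<forall>n. (X n, Y n) \<in> A) \<and> hlim ip1 X x \<and> hlim ip2 Y y}"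

definition closed_op :: "('a::ab_group_add \<Rightarrow> 'a \<Rightarrow> complex) \<Rightarrow> ('b::ab_group_add \<Rightarrow> 'b \<Rightarrow> complex)
    \<Rightarrow> ('a \<times> 'b) set \<Rightarrow> bool" where
  "closed_op ip1 ip2 A \<longleftrightarrow> op_closure ip1 ip2 A \<subseteq> A"

definition closable :: "('a::ab_group_add \<Rightarrow> 'a \<Rightarrow> complex) \<Rightarrow> ('b::ab_group_add \<Rightarrow> 'b \<Rightarrow> complex)
    \<Rightarrow> ('a \<times> 'b) set \<Rightarrow> bool" where
  "closable ip1 ip2 A \<longleftrightarrow> is_graph (op_closure ip1 ip2 A)"

definition densely_defined :: "('a::ab_group_add \<Rightarrow> 'a \<Rightarrow> complex) \<Rightarrow> ('a \<times> 'b) set \<Rightarrow> bool" where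
  "densely_defined ip A \<longleftrightarrow> hdense ip (op_dom A)"

definition op_adj :: "('a \<Rightarrow> 'a \<Rightarrow> complex) \<Rightarrow> ('b \<Rightarrow> 'b \<Rightarrow> complex)
    \<Rightarrow> ('a \<times> 'b) set \<Rightarrow> ('b \<times> 'a) set" where
  "op_adj ip1 ip2 A = {(y, z). \<forall>x w. (x, w) \<in> A \<longrightarrow> ip2 w y = ip1 x z}"

text \<open>product B A (apply A first) with natural domain\<close>
definition op_comp :: "('b \<times> 'c) set \<Rightarrow> ('a \<times> 'b) set \<Rightarrow> ('a \<times> 'c) set" where
  "op_comp B A = {(x, z). \<exists>y. (x, y) \<in> A \<and> (y, z) \<in> B}"

definition op_restrict :: "('a \<times> 'b) set \<Rightarrow> 'a set \<Rightarrow> ('a \<times> 'b) set" where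
  "op_restrict A D = {(x, y) \<in> A. x \<in> D}"

definition op_plus :: "('a \<times> 'b::plus) set \<Rightarrow> ('a \<times> 'b) set \<Rightarrow> ('a \<times> 'b) set" where
  "op_plus A B = {(x, y + z) | x y z. (x, y) \<in> A \<and> (x, z) \<in> B}"

definition op_shift :: "(complex \<Rightarrow> 'a::ab_group_add \<Rightarrow> 'a) \<Rightarrow> ('a \<times> 'a) set \<Rightarrow> complex \<Rightarrow> ('a \<times> 'a) set" where
  "op_shift sc A z = {(x, y - sc z x) | x y. (x, y) \<in> A}"

definition op_I_minus :: "('a::ab_group_add \<times> 'a) set \<Rightarrow> ('a \<times> 'a) set" where
  "op_I_minus A = {(x, x - y) | x y. (x, y) \<in> A}"

definition op_inv :: "('a \<times> 'b) set \<Rightarrow> ('b \<times> 'a) set" where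
  "op_inv A = converse A"

text \<open>resolvent set: A - z is a bijection of dom A onto the whole space with bounded inverse
  (no closedness required, as in the paper)\<close>
definition resolvent_set :: "(complex \<Rightarrow> 'a::ab_group_add \<Rightarrow> 'a) \<Rightarrow> ('a \<Rightarrow> 'a \<Rightarrow> complex)
    \<Rightarrow> ('a \<times> 'a) set \<Rightarrow> complex set" where
  "resolvent_set sc ip A = {z. is_graph (op_inv (op_shift sc A z)) \<and>
      op_ran (op_shift sc A z) = UNIV \<and>
      (\<exists>K. \<forall>x y. (y, x) \<in> op_inv (op_shift sc A z) \<longrightarrow> hnorm ip x \<le> K * hnorm ip y)}"

definition ker_restr :: "('a \<times> 'a) set \<Rightarrow> ('a \<Rightarrow> 'g::zero) \<Rightarrow> ('a \<times> 'a) set" where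
  "ker_restr T \<Gamma> = op_restrict T {f. \<Gamma> f = 0}"

text \<open>gamma field: \<gamma>(z) = (\<Gamma>0 restricted to ker(T - z))^-1, as a graph in G x H\<close>
definition gamma_field :: "(complex \<Rightarrow> 'a \<Rightarrow> 'a) \<Rightarrow> ('a \<times> 'a) set \<Rightarrow> ('a \<Rightarrow> 'g) \<Rightarrow> complex
    \<Rightarrow> ('g \<times> 'a) set" where
  "gamma_field sc T \<Gamma>0 z = {(\<Gamma>0 f, f) | f. (f, sc z f) \<in> T}"

text \<open>Weyl function M(z) = \<Gamma>1 \<gamma>(z)\<close>
definition weyl :: "(complex \<Rightarrow> 'a \<Rightarrow> 'a) \<Rightarrow> ('a \<times> 'a) set \<Rightarrow> ('a \<Rightarrow> 'g) \<Rightarrow> ('a \<Rightarrow> 'g) \<Rightarrow> complex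
    \<Rightarrow> ('g \<times> 'g) set" where
  "weyl sc T \<Gamma>0 \<Gamma>1 z = {(\<Gamma>0 f, \<Gamma>1 f) | f. (f, sc z f) \<in> T}"

definition ext_B :: "('a \<times> 'a) set \<Rightarrow> ('a \<Rightarrow> 'g) \<Rightarrow> ('a \<Rightarrow> 'g) \<Rightarrow> ('g \<times> 'g) set \<Rightarrow> ('g \<times> 'g) set
    \<Rightarrow> ('a \<times> 'a) set" where
  "ext_B T \<Gamma>0 \<Gamma>1 B1 B2 = {(f, g) \<in> T. (\<Gamma>1 f, \<Gamma>0 f) \<in> op_comp B1 B2}"

end

theory Submission
  imports Defs "HOL-Analysis.Analysis"
begin


locale hilb =
  fixes sc :: "complex \<Rightarrow> 'a::ab_group_add \<Rightarrow> 'a" and ip :: "'a \<Rightarrow> 'a \<Rightarrow> complex"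
  assumes hs: "hilbert_space sc ip"
begin

lemma H: "Vector_Spaces.vector_space sc \<and>
     (\<forall>x y z. ip (x + y) z = ip x z + ip y z) \<and>
     (\<forall>c x y. ip (sc c x) y = c * ip x y) \<and>
     (\<forall>x y. ip y x = cnj (ip x y)) \<and>
     (\<forall>x. 0 \<le> Re (ip x x)) \<and>
     (\<forall>x. ip x x = 0 \<longrightarrow> x = 0) \<and>
     (\<forall>X. hcauchy ip X \<longrightarrow> (\<exists>x. hlim ip X x))"
  using hs unfolding hilbert_space_def .

sublocale vs: vector_space sc
  using H by (rule conjunct1)

lemma ip_add_left: "ip (x + y) z = ip x z + ip y z"
  using H[THEN conjunct2, THEN conjunct1] by blast
lemma ip_scale_left: "ip (sc c x) y = c * ip x y"
  using H[THEN conjunct2, THEN conjunct2, THEN conjunct1] by blast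
lemma ip_sym: "ip y x = cnj (ip x y)"
  using H[THEN conjunct2, THEN conjunct2, THEN conjunct2, THEN conjunct1] by blast
lemma ip_pos: "0 \<le> Re (ip x x)"
  using H[THEN conjunct2, THEN conjunct2, THEN conjunct2, THEN conjunct2, THEN conjunct1] by blast
lemma ip_eq0: "ip x x = 0 \<Longrightarrow> x = 0"
  using H[THEN conjunct2, THEN conjunct2, THEN conjunct2, THEN conjunct2, THEN conjunct2, THEN conjunct1] by blast
lemma complete: "hcauchy ip X \<Longrightarrow> \<exists>x. hlim ip X x"
  using H[THEN conjunct2, THEN conjunct2, THEN conjunct2, THEN conjunct2, THEN conjunct2, THEN conjunct2] by blast

lemma ip_add_right: "ip z (x + y) = ip z x + ip z y"
proof -
  have "ip z (x+y) = cnj (ip (x+y) z)" by (rule ip_sym)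
  also have "\<dots> = cnj (ip x z) + cnj (ip y z)" by (simp add: ip_add_left)
  also have "\<dots> = ip z x + ip z y" by (simp add: ip_sym[of x z] ip_sym[of y z])
  finally show ?thesis .
qed
lemma ip_scale_right: "ip x (sc c y) = cnj c * ip x y"
proof -
  have "ip x (sc c y) = cnj (ip (sc c y) x)" by (rule ip_sym)
  also have "\<dots> = cnj c * cnj (ip y x)" by (simp add: ip_scale_left)
  also have "\<dots> = cnj c * ip x y" by (simp add: ip_sym[of y x])
  finally show ?thesis .
qed
lemma ip_zero_left[simp]: "ip 0 y = 0"
  using ip_add_left[of 0 0 y] by simp
lemma ip_zero_right[simp]: "ip y 0 = 0"
  using ip_add_right[of y 0 0] by simp
lemma ip_minus_left: "ip (- x) y = - ip x y"
proof -
  have "ip x y + ip (-x) y = 0" using ip_add_left[of x "-x" y] by simp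
  then show ?thesis by (metis add.commute add_eq_0_iff2)
qed
lemma ip_minus_right: "ip y (- x) = - ip y x"
proof -
  have "ip y x + ip y (-x) = 0" using ip_add_right[of y x "-x"] by simp
  then show ?thesis by (metis add.commute add_eq_0_iff2)
qed
lemma ip_diff_left: "ip (x - y) z = ip x z - ip y z"
  using ip_add_left[of x "-y" z] ip_minus_left[of y z] by simp
lemma ip_diff_right: "ip z (x - y) = ip z x - ip z y"
  using ip_add_right[of z x "-y"] ip_minus_right[of z y] by simp

lemma ip_self_real: "ip x x = complex_of_real (Re (ip x x))"
proof -
  have "Im (ip x x) = 0" using arg_cong[OF ip_sym[of x x], of Im] by simp
  then show ?thesis by (simp add: complex_eq_iff)
qed

abbreviation nm where "nm \<equiv> hnorm ip"

lemma nm_nonneg[simp]: "0 \<le> nm x"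
  by (simp add: hnorm_def ip_pos)
lemma nm_sq: "(nm x)^2 = Re (ip x x)"
  by (simp add: hnorm_def ip_pos)
lemma nm_zero_iff[simp]: "nm x = 0 \<longleftrightarrow> x = 0"
proof
  assume "nm x = 0"
  then have "Re (ip x x) = 0" using nm_sq[of x] by simp
  then have "ip x x = 0" using ip_self_real[of x] by simp
  then show "x = 0" by (rule ip_eq0)
qed (simp add: hnorm_def)
lemma nm_zero[simp]: "nm 0 = 0" by simp

lemma nm_scale: "nm (sc c x) = cmod c * nm x"
proof -
  have "ip (sc c x) (sc c x) = (c * cnj c) * ip x x" by (simp add: ip_scale_left ip_scale_right mult.assoc)
  also have "c * cnj c = complex_of_real ((cmod c)^2)" by (rule complex_norm_square[symmetric])
  finally have "Re (ip (sc c x) (sc c x)) = (cmod c)^2 * Re (ip x x)" by simp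
  then show ?thesis
    by (simp add: hnorm_def real_sqrt_mult)
qed

lemma nm_minus: "nm (- x) = nm x"
  using nm_scale[of "-1" x] by simp

lemma nm_diff_commute: "nm (x - y) = nm (y - x)"
  by (metis minus_diff_eq nm_minus)

lemma cauchy_schwarz: "cmod (ip x y) \<le> nm x * nm y"
proof (cases "y = 0")
  case True then show ?thesis by simp
next
  case False
  define a where "a = ip x y"
  define b where "b = Re (ip y y)"
  have bpos: "b > 0" using False nm_sq[of y] nm_zero_iff[of y] unfolding b_def
    by (metis nm_nonneg less_eq_real_def zero_less_power2)
  define t where "t = a / complex_of_real b"
  have yy: "ip y y = complex_of_real b" using ip_self_real unfolding b_def by simp
  have yx: "ip y x = cnj a" unfolding a_def by (rule ip_sym)
  have "ip (x - sc t y) (x - sc t y) = ip x x - cnj t * a - t * cnj a + t * cnj t * complex_of_real b"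
    by (simp add: ip_diff_left ip_diff_right ip_scale_left ip_scale_right yy yx a_def algebra_simps)
  also have "\<dots> = ip x x - (a * cnj a) / complex_of_real b"
    using bpos unfolding t_def
    by (simp add: field_simps)
  also have "\<dots> = ip x x - complex_of_real ((cmod a)^2 / b)"
    by (simp add: complex_norm_square[symmetric])
  finally have "0 \<le> Re (ip x x) - (cmod a)^2 / b"
    using ip_pos[of "x - sc t y"] by simp
  then have "(cmod a)^2 \<le> Re (ip x x) * b" using bpos by (simp add: field_simps)
  also have "\<dots> = (nm x * nm y)^2" by (simp add: nm_sq b_def power_mult_distrib)
  finally show ?thesis unfolding a_def
    by (meson mult_nonneg_nonneg nm_nonneg power2_le_imp_le)
qed

lemma nm_triangle: "nm (x + y) \<le> nm x + nm y"
proof -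
  have "Re (ip (x + y) (x + y)) = Re (ip x x) + Re (ip y y) + 2 * Re (ip x y)"
    using ip_sym[of x y] by (simp add: ip_add_left ip_add_right)
  also have "\<dots> \<le> (nm x)^2 + (nm y)^2 + 2 * (nm x * nm y)"
    using cauchy_schwarz[of x y] complex_Re_le_cmod[of "ip x y"] by (simp add: nm_sq)
  also have "\<dots> = (nm x + nm y)^2" by (simp add: power2_eq_square algebra_simps)
  finally have "(nm (x + y))^2 \<le> (nm x + nm y)^2" by (simp add: nm_sq)
  then show ?thesis by (rule power2_le_imp_le) simp
qed

lemma nm_triangle_diff: "nm (x - z) \<le> nm (x - y) + nm (y - z)"
  using nm_triangle[of "x - y" "y - z"] by simp

lemma nm_diff_ge: "nm x - nm y \<le> nm (x - y)"
  using nm_triangle[of "x - y" y] by simp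

lemma nm_diff_abs: "\<bar>nm x - nm y\<bar> \<le> nm (x - y)"
  using nm_diff_ge[of x y] nm_diff_ge[of y x] nm_diff_commute[of x y] by linarith

end


lemma tends0_cmp:
  fixes f :: "nat \<Rightarrow> 'b::real_normed_vector"
  assumes "g \<longlonglongrightarrow> 0" "\<And>n. norm (f n) \<le> g n" shows "f \<longlonglongrightarrow> 0"
  using Lim_null_comparison[OF always_eventually[of "\<lambda>n. norm (f n) \<le> g n"] assms(1)] assms(2) by blast

context hilb begin

lemma hlim_iff: "hlim ip X x \<longleftrightarrow> (\<forall>e>0. \<exists>N. \<forall>n\<ge>N. nm (X n - x) < e)"
  unfolding hlim_def
  by (simp add: LIMSEQ_iff)

lemma hlim_const: "hlim ip (\<lambda>n. x) x"
  by (simp add: hlim_def)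

lemma hlim_bound:
  assumes "hlim ip Y y" "\<And>n. nm (X n - x) \<le> c * nm (Y n - y)"
  shows "hlim ip X x"
proof -
  have c: "\<And>n. 0 \<le> c * nm (Y n - y)" using assms(2) by (meson nm_nonneg order_trans)
  have "(\<lambda>n. c * nm (Y n - y)) \<longlonglongrightarrow> c * 0"
    using assms(1) unfolding hlim_def by (intro tendsto_mult tendsto_const)
  then have "(\<lambda>n. c * nm (Y n - y)) \<longlonglongrightarrow> 0" by simp
  then show ?thesis unfolding hlim_def
    by (rule tends0_cmp) (use assms(2) in auto)
qed

lemma hlim_add: "hlim ip X x \<Longrightarrow> hlim ip Y y \<Longrightarrow> hlim ip (\<lambda>n. X n + Y n) (x + y)"
proof -
  assume a: "hlim ip X x" "hlim ip Y y"
  have "(\<lambda>n. nm (X n - x) + nm (Y n - y)) \<longlonglongrightarrow> 0 + 0"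
    using a unfolding hlim_def by (intro tendsto_add)
  then have "(\<lambda>n. nm (X n - x) + nm (Y n - y)) \<longlonglongrightarrow> 0" by simp
  then show ?thesis unfolding hlim_def
  proof (rule tends0_cmp)
    fix n
    have "nm (X n + Y n - (x + y)) = nm ((X n - x) + (Y n - y))" by (simp add: algebra_simps)
    also have "\<dots> \<le> nm (X n - x) + nm (Y n - y)" by (rule nm_triangle)
    finally show "norm (nm (X n + Y n - (x + y))) \<le> nm (X n - x) + nm (Y n - y)" by simp
  qed
qed

lemma hlim_scale: "hlim ip X x \<Longrightarrow> hlim ip (\<lambda>n. sc c (X n)) (sc c x)"
  by (rule hlim_bound[where c = "cmod c"], assumption)
     (simp add: nm_scale vs.scale_right_diff_distrib[symmetric])

lemma hlim_minus: "hlim ip X x \<Longrightarrow> hlim ip (\<lambda>n. - X n) (- x)"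
  using hlim_scale[of X x "-1"] by simp

lemma hlim_diff: "hlim ip X x \<Longrightarrow> hlim ip Y y \<Longrightarrow> hlim ip (\<lambda>n. X n - Y n) (x - y)"
  using hlim_add[of X x "\<lambda>n. - Y n" "- y"] hlim_minus[of Y y] by simp

lemma hlim_zero_iff: "hlim ip X x \<longleftrightarrow> hlim ip (\<lambda>n. X n - x) 0"
  by (simp add: hlim_def)

lemma hlim_nm: "hlim ip X x \<Longrightarrow> (\<lambda>n. nm (X n)) \<longlonglongrightarrow> nm x"
proof -
  assume a: "hlim ip X x"
  have "(\<lambda>n. nm (X n) - nm x) \<longlonglongrightarrow> 0"
    using a unfolding hlim_def
    by (rule tends0_cmp) (auto intro: nm_diff_abs)
  then show ?thesis by (simp add: LIM_zero_iff)
qed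

lemma hlim_ip_left: "hlim ip X x \<Longrightarrow> (\<lambda>n. ip (X n) y) \<longlonglongrightarrow> ip x y"
proof -
  assume a: "hlim ip X x"
  have "(\<lambda>n. nm (X n - x) * nm y) \<longlonglongrightarrow> 0 * nm y"
    using a unfolding hlim_def by (intro tendsto_mult tendsto_const)
  then have "(\<lambda>n. nm (X n - x) * nm y) \<longlonglongrightarrow> 0" by simp
  then have "(\<lambda>n. ip (X n) y - ip x y) \<longlonglongrightarrow> 0"
    by (rule tends0_cmp)
       (auto simp: ip_diff_left[symmetric] intro: cauchy_schwarz)
  then show ?thesis by (simp add: LIM_zero_iff)
qed

lemma hlim_ip_right: "hlim ip X x \<Longrightarrow> (\<lambda>n. ip y (X n)) \<longlonglongrightarrow> ip y x"
proof -
  assume a: "hlim ip X x"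
  have "(\<lambda>n. nm y * nm (X n - x)) \<longlonglongrightarrow> nm y * 0"
    using a unfolding hlim_def by (intro tendsto_mult tendsto_const)
  then have "(\<lambda>n. nm y * nm (X n - x)) \<longlonglongrightarrow> 0" by simp
  then have "(\<lambda>n. ip y (X n) - ip y x) \<longlonglongrightarrow> 0"
    by (rule tends0_cmp)
       (auto simp: ip_diff_right[symmetric] intro: cauchy_schwarz)
  then show ?thesis by (simp add: LIM_zero_iff)
qed

lemma hlim_unique: "hlim ip X x \<Longrightarrow> hlim ip X y \<Longrightarrow> x = y"
proof -
  assume a: "hlim ip X x" "hlim ip X y"
  have "(\<lambda>n. ip (X n) (x - y)) \<longlonglongrightarrow> ip x (x - y)" "(\<lambda>n. ip (X n) (x - y)) \<longlonglongrightarrow> ip y (x - y)"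
    using a by (auto intro: hlim_ip_left)
  then have "ip x (x - y) = ip y (x - y)" using LIMSEQ_unique by blast
  then have "ip (x - y) (x - y) = 0" by (simp add: ip_diff_left)
  then have "x - y = 0" by (rule ip_eq0)
  then show ?thesis by simp
qed

lemma hlim_le:
  assumes "hlim ip X x" "\<And>n. nm (X n) \<le> B" shows "nm x \<le> B"
  by (rule LIMSEQ_le_const2[OF hlim_nm[OF assms(1)]]) (use assms(2) in auto)

lemma ortho_dense:
  assumes "hdense ip S" "\<And>s. s \<in> S \<Longrightarrow> ip s z = 0" shows "z = 0"
proof -
  have "z \<in> hclosure ip S" using assms(1) by (simp add: hdense_def)
  then obtain X where X: "\<And>n. X n \<in> S" "hlim ip X z" by (auto simp: hclosure_def)
  have "(\<lambda>n. ip (X n) z) \<longlonglongrightarrow> ip z z" using X(2) by (rule hlim_ip_left)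
  moreover have "(\<lambda>n. ip (X n) z) = (\<lambda>n. 0)" using X(1) assms(2) by auto
  ultimately have "ip z z = 0" using LIMSEQ_unique tendsto_const by metis
  then show ?thesis by (rule ip_eq0)
qed

sublocale ms: Metric_space UNIV "\<lambda>x y. nm (x - y)"
  by unfold_locales (auto simp: nm_diff_commute nm_triangle_diff)

lemma limitin_iff: "limitin ms.mtopology X x sequentially \<longleftrightarrow> hlim ip X x"
  unfolding ms.limitin_metric hlim_iff by (simp add: eventually_sequentially)

lemma mcomplete: "ms.mcomplete"
  unfolding ms.mcomplete_def
proof (intro allI impI)
  fix \<sigma> assume "ms.MCauchy \<sigma>"
  then have "hcauchy ip \<sigma>" unfolding ms.MCauchy_def hcauchy_def by metis
  then obtain x where "hlim ip \<sigma> x" using complete by blast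
  then show "\<exists>x. limitin ms.mtopology \<sigma> x sequentially" using limitin_iff by blast
qed

end


definition fun_of :: "('a \<times> 'b) set \<Rightarrow> 'a \<Rightarrow> 'b" where
  "fun_of A x = (THE y. (x, y) \<in> A)"

lemma fun_of_eq: "is_graph A \<Longrightarrow> (x, y) \<in> A \<Longrightarrow> fun_of A x = y"
  unfolding fun_of_def is_graph_def by blast

lemma fun_of_in: "is_graph A \<Longrightarrow> x \<in> op_dom A \<Longrightarrow> (x, fun_of A x) \<in> A"
  unfolding op_dom_def by (auto simp: fun_of_eq)

locale hilb2 = H1: hilb sc1 ip1 + H2: hilb sc2 ip2
  for sc1 :: "complex \<Rightarrow> 'a::ab_group_add \<Rightarrow> 'a" and ip1
  and sc2 :: "complex \<Rightarrow> 'b::ab_group_add \<Rightarrow> 'b" and ip2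
begin

lemma lin_graph: "lin_op sc1 sc2 A \<Longrightarrow> is_graph A" by (simp add: lin_op_def)
lemma lin_zero: "lin_op sc1 sc2 A \<Longrightarrow> (0, 0) \<in> A" by (simp add: lin_op_def)
lemma lin_add: "lin_op sc1 sc2 A \<Longrightarrow> (x, y) \<in> A \<Longrightarrow> (u, v) \<in> A \<Longrightarrow> (x + u, y + v) \<in> A"
  by (simp add: lin_op_def)
lemma lin_scale: "lin_op sc1 sc2 A \<Longrightarrow> (x, y) \<in> A \<Longrightarrow> (sc1 c x, sc2 c y) \<in> A"
  by (simp add: lin_op_def)
lemma lin_minus: "lin_op sc1 sc2 A \<Longrightarrow> (x, y) \<in> A \<Longrightarrow> (- x, - y) \<in> A"
  using lin_scale[of A x y "-1"] by simp
lemma lin_diff: "lin_op sc1 sc2 A \<Longrightarrow> (x, y) \<in> A \<Longrightarrow> (u, v) \<in> A \<Longrightarrow> (x - u, y - v) \<in> A"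
  using lin_add[of A x y "-u" "-v"] lin_minus[of A u v] by simp

lemma nm_diff_le: "H2.nm (u - v) \<le> H2.nm u + H2.nm v"
  using H2.nm_triangle[of u "- v"] H2.nm_minus[of v] by simp

theorem cgt:
  assumes lin: "lin_op sc1 sc2 A" and dom: "op_dom A = UNIV" and cl: "closed_op ip1 ip2 A"
  shows "\<exists>K. \<forall>x y. (x, y) \<in> A \<longrightarrow> H2.nm y \<le> K * H1.nm x"
proof -
  define F where "F x = fun_of A x" for x
  have gr: "is_graph A" using lin by (rule lin_graph)
  have FA: "(x, F x) \<in> A" for x using fun_of_in[OF gr] dom unfolding F_def by auto
  have Feq: "(x, y) \<in> A \<Longrightarrow> F x = y" for x y using fun_of_eq[OF gr] unfolding F_def by auto
  have Fadd: "F (x + y) = F x + F y" for x y using lin_add[OF lin FA FA] Feq by blast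
  have Fscale: "F (sc1 c x) = sc2 c (F x)" for c x using lin_scale[OF lin FA] Feq by blast
  have Fdiff: "F (x - y) = F x - F y" for x y using lin_diff[OF lin FA FA] Feq by blast
  have F0: "F 0 = 0" using lin_zero[OF lin] Feq by blast
  define E where "E n = {x. H2.nm (F x) \<le> real n}" for n :: nat
  define C where "C n = H1.ms.mtopology closure_of E n" for n
  have "\<exists>n a r. r > 0 \<and> H1.ms.mball a r \<subseteq> C n"
  proof (rule ccontr)
    assume no: "\<not> ?thesis"
    have "H1.ms.mtopology interior_of \<Union>(range C) = {}"
    proof (rule H1.ms.metric_Baire_category_alt[OF H1.mcomplete])
      show "countable (range C)" by simp
      fix T assume "T \<in> range C"
      then obtain n where T: "T = C n" by auto
      show "closedin H1.ms.mtopology T \<and> H1.ms.mtopology interior_of T = {}"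
      proof
        show "closedin H1.ms.mtopology T" by (simp add: T C_def)
        show "H1.ms.mtopology interior_of T = {}"
        proof (rule ccontr)
          assume "H1.ms.mtopology interior_of T \<noteq> {}"
          then obtain a where "a \<in> H1.ms.mtopology interior_of T" by blast
          then obtain U where U: "openin H1.ms.mtopology U" "a \<in> U" "U \<subseteq> T"
            by (auto simp: interior_of_def)
          then obtain r where "r > 0" "H1.ms.mball a r \<subseteq> U"
            using H1.ms.openin_mtopology by blast
          with no U T show False by blast
        qed
      qed
    qed
    moreover have "\<Union>(range C) = UNIV"
    proof -
      have "x \<in> C (nat \<lceil>H2.nm (F x)\<rceil>)" for x
      proof -
        have "x \<in> E (nat \<lceil>H2.nm (F x)\<rceil>)" unfolding E_def by (simp add: real_nat_ceiling_ge)
        then show ?thesis unfolding C_def using closure_of_subset[of "E _" H1.ms.mtopology] by auto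
      qed
      then show ?thesis by blast
    qed
    ultimately show False using interior_of_topspace[of H1.ms.mtopology] by simp
  qed
  then obtain n a r where r: "r > 0" and ball: "H1.ms.mball a r \<subseteq> C n" by blast
  have approx: "\<exists>y. H1.nm (x - y) < e \<and> H2.nm (F y) \<le> 2 * real n"
    if x: "H1.nm x < r" and e: "e > 0" for x e
  proof -
    have inC: "z \<in> C n \<Longrightarrow> \<exists>y\<in>E n. H1.nm (z - y) < e / 2" for z
      unfolding C_def H1.ms.metric_closure_of using e by (auto dest!: spec[where x="e/2"])
    have "a + x \<in> C n"
      using ball x by (auto simp: H1.nm_minus)
    then obtain y1 where y1: "y1 \<in> E n" "H1.nm ((a + x) - y1) < e / 2" using inC by blast
    have "a \<in> C n" using ball r by auto
    then obtain y2 where y2: "y2 \<in> E n" "H1.nm (a - y2) < e / 2" using inC by blast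
    have "x - (y1 - y2) = ((a + x) - y1) - (a - y2)" by (simp add: algebra_simps)
    then have "H1.nm (x - (y1 - y2)) \<le> H1.nm ((a + x) - y1) + H1.nm (a - y2)"
      using hilb2.nm_diff_le[of sc2 ip2 sc1 ip1] H1.hilb_axioms H2.hilb_axioms
      by (metis H1.nm_minus H1.nm_triangle diff_conv_add_uminus)
    moreover have "H2.nm (F (y1 - y2)) \<le> 2 * real n"
      using nm_diff_le[of "F y1" "F y2"] y1 y2 unfolding Fdiff E_def by auto
    ultimately show ?thesis using y1 y2 by (intro exI[of _ "y1 - y2"]) auto
  qed
  define M' where "M' = 4 * real n / r"
  have M'0: "M' \<ge> 0" using r by (simp add: M'_def)
  have approx2: "\<exists>y. H1.nm (x - y) < e \<and> H2.nm (F y) \<le> M' * H1.nm x" if e: "e > 0" for x e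
  proof (cases "x = 0")
    case True then show ?thesis using e F0 by (intro exI[of _ 0]) auto
  next
    case False
    then have nx: "H1.nm x > 0" using H1.nm_nonneg H1.nm_zero_iff by (metis less_eq_real_def)
    define s where "s = r / (2 * H1.nm x)"
    have s: "s > 0" using r nx by (simp add: s_def)
    define x' where "x' = sc1 (of_real s) x"
    have "H1.nm x' = s * H1.nm x" using s by (simp add: x'_def H1.nm_scale)
    also have "\<dots> = r / 2" using nx False by (simp add: s_def)
    finally have "H1.nm x' < r" using r by simp
    then obtain y' where y': "H1.nm (x' - y') < e * s" "H2.nm (F y') \<le> 2 * real n"
      using approx[of x' "e * s"] e s by auto
    define y where "y = sc1 (of_real (1 / s)) y'"
    have "x - y = sc1 (of_real (1 / s)) (x' - y')"
      using s by (simp add: x'_def y_def H1.vs.scale_right_diff_distrib)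
    then have "H1.nm (x - y) = (1 / s) * H1.nm (x' - y')" using s by (simp add: H1.nm_scale norm_divide)
    also have "\<dots> < (1 / s) * (e * s)" using y'(1) s by (intro mult_strict_left_mono) auto
    also have "\<dots> = e" using s by simp
    finally have 1: "H1.nm (x - y) < e" .
    have "H2.nm (F y) = (1 / s) * H2.nm (F y')" using s by (simp add: y_def Fscale H2.nm_scale norm_divide)
    also have "\<dots> \<le> (1 / s) * (2 * real n)" using y'(2) s by (intro mult_left_mono) auto
    also have "\<dots> = M' * H1.nm x" using nx r by (simp add: s_def M'_def field_simps)
    finally show ?thesis using 1 by blast
  qed
  have bound: "H2.nm (F x) \<le> 2 * M' * H1.nm x" for x
  proof (cases "x = 0")
    case True then show ?thesis by (simp add: F0)
  next
    case False
    define c where "c = H1.nm x"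
    have c: "c > 0" using False H1.nm_nonneg H1.nm_zero_iff unfolding c_def by (metis less_eq_real_def)
    define g where "g k u = (SOME y. H1.nm (u - y) < c / 2 ^ Suc k \<and> H2.nm (F y) \<le> M' * H1.nm u)" for k :: nat and u
    have g: "H1.nm (u - g k u) < c / 2 ^ Suc k \<and> H2.nm (F (g k u)) \<le> M' * H1.nm u" for k u
      unfolding g_def by (rule someI_ex) (rule approx2, use c in simp)
    define s where "s = rec_nat 0 (\<lambda>k sk. sk + g k (x - sk))"
    have s0: "s 0 = 0" and sS: "s (Suc k) = s k + g k (x - s k)" for k by (simp_all add: s_def)
    have res: "H1.nm (x - s k) \<le> c / 2 ^ k" for k
    proof (induction k)
      case 0 then show ?case by (simp add: s0 c_def)
    next
      case (Suc k)
      have e: "x - s (Suc k) = (x - s k) - g k (x - s k)" by (simp add: sS algebra_simps)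
      show ?case unfolding e using g[of "x - s k" k] by simp
    qed
    have Fy: "H2.nm (F (g k (x - s k))) \<le> M' * c / 2 ^ k" for k
    proof -
      have "H2.nm (F (g k (x - s k))) \<le> M' * H1.nm (x - s k)" using g[of "x - s k" k] by simp
      also have "\<dots> \<le> M' * (c / 2 ^ k)" by (rule mult_left_mono[OF res M'0])
      finally show ?thesis by simp
    qed
    define t where "t k = F (s k)" for k
    have tS: "t (Suc k) = t k + F (g k (x - s k))" for k by (simp add: t_def sS Fadd)
    have tb: "H2.nm (t m' - t m) \<le> 2 * M' * c * (1 / 2 ^ m - 1 / 2 ^ m')" if "m \<le> m'" for m m'
      using that
    proof (induction m' rule: dec_induct)
      case base then show ?case by simp
    next
      case (step k)
      have "t (Suc k) - t m = (t k - t m) + F (g k (x - s k))" by (simp add: tS algebra_simps)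
      then have "H2.nm (t (Suc k) - t m) \<le> H2.nm (t k - t m) + H2.nm (F (g k (x - s k)))"
        by (metis H2.nm_triangle)
      also have "\<dots> \<le> 2 * M' * c * (1 / 2 ^ m - 1 / 2 ^ k) + M' * c / 2 ^ k"
        using step.IH Fy[of k] by linarith
      also have "\<dots> = 2 * M' * c * (1 / 2 ^ m - 1 / 2 ^ Suc k)" by (simp add: field_simps)
      finally show ?case .
    qed
    have lim0: "(\<lambda>k. 2 * M' * c / 2 ^ k) \<longlonglongrightarrow> 0" by (rule LIMSEQ_divide_realpow_zero) simp
    have tb2: "H2.nm (t m' - t m) \<le> 2 * M' * c / 2 ^ m" if "m \<le> m'" for m m'
    proof -
      have "2 * M' * c * (1 / 2 ^ m - 1 / 2 ^ m') \<le> 2 * M' * c / 2 ^ m"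
        using M'0 c by (simp add: field_simps)
      then show ?thesis using tb[OF that] by linarith
    qed
    have "hcauchy ip2 t"
      unfolding hcauchy_def
    proof (intro allI impI)
      fix e :: real assume e: "e > 0"
      then obtain N where N: "\<And>k. k \<ge> N \<Longrightarrow> 2 * M' * c / 2 ^ k < e"
        using lim0 M'0 c e unfolding LIMSEQ_iff by (auto simp: abs_of_nonneg)
      have "H2.nm (t m - t k) < e" if "m \<ge> N" "k \<ge> N" for m k
      proof (cases "k \<le> m")
        case True then show ?thesis using tb2[OF True] N[OF that(2)] by linarith
      next
        case False then show ?thesis using tb2[of m k] N[OF that(1)] H2.nm_diff_commute[of "t m" "t k"] by simp
      qed
      then show "\<exists>N. \<forall>m\<ge>N. \<forall>n\<ge>N. H2.nm (t m - t n) < e" by blast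
    qed
    then obtain w where w: "hlim ip2 t w" using H2.complete by blast
    have sx: "hlim ip1 s x"
      unfolding hlim_def
    proof (rule tends0_cmp)
      show "(\<lambda>k. c / 2 ^ k) \<longlonglongrightarrow> 0" by (rule LIMSEQ_divide_realpow_zero) simp
      show "norm (H1.nm (s k - x)) \<le> c / 2 ^ k" for k using res[of k] H1.nm_diff_commute[of "s k" x] by simp
    qed
    have "(x, w) \<in> op_closure ip1 ip2 A" unfolding op_closure_def
    proof -
      have "\<forall>k. (s k, t k) \<in> A" using FA by (simp add: t_def)
      then show "(x, w) \<in> {(x, y). \<exists>X Y. (\<forall>n. (X n, Y n) \<in> A) \<and> hlim ip1 X x \<and> hlim ip2 Y y}"
        using sx w by blast
    qed
    then have "(x, w) \<in> A" using cl by (auto simp: closed_op_def)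
    then have Fw: "F x = w" by (rule Feq)
    have "H2.nm w \<le> 2 * M' * c"
    proof (rule H2.hlim_le[OF w])
      fix k
      have "H2.nm (t k - t 0) \<le> 2 * M' * c / 2 ^ 0" by (rule tb2) simp
      then show "H2.nm (t k) \<le> 2 * M' * c" by (simp add: t_def s0 F0)
    qed
    then show ?thesis using Fw by (simp add: c_def)
  qed
  show ?thesis using bound Feq by blast
qed

end


context hilb begin

lemma proj_identity:
  assumes "y \<noteq> 0"
  shows "Re (ip (x - sc (ip x y / ip y y) y) (x - sc (ip x y / ip y y) y)) = Re (ip x x) - (cmod (ip x y))^2 / Re (ip y y)"
proof -
  define a where "a = ip x y"
  define b where "b = Re (ip y y)"
  have bpos: "b > 0" using assms nm_sq[of y] nm_zero_iff[of y] unfolding b_def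
    by (metis nm_nonneg less_eq_real_def zero_less_power2)
  have yy: "ip y y = complex_of_real b" using ip_self_real unfolding b_def by simp
  define t where "t = a / complex_of_real b"
  have yx: "ip y x = cnj a" unfolding a_def by (rule ip_sym)
  have "ip (x - sc t y) (x - sc t y) = ip x x - cnj t * a - t * cnj a + t * cnj t * complex_of_real b"
    by (simp add: ip_diff_left ip_diff_right ip_scale_left ip_scale_right yy yx a_def algebra_simps)
  also have "\<dots> = ip x x - (a * cnj a) / complex_of_real b"
    using bpos unfolding t_def
    by (simp add: field_simps)
  also have "\<dots> = ip x x - complex_of_real ((cmod a)^2 / b)"
    by (simp add: complex_norm_square[symmetric])
  finally have eq: "ip (x - sc t y) (x - sc t y) = ip x x - complex_of_real ((cmod a)^2 / b)" .
  have tt: "ip x y / ip y y = t" by (simp add: t_def a_def yy)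
  show ?thesis unfolding tt eq by (simp add: a_def b_def)
qed

lemma parallelogram: "(nm (a + b))^2 + (nm (a - b))^2 = 2 * (nm a)^2 + 2 * (nm b)^2"
  by (simp add: nm_sq ip_add_left ip_add_right ip_diff_left ip_diff_right)

theorem riesz:
  fixes \<phi> :: "'a \<Rightarrow> complex"
  assumes add: "\<And>x y. \<phi> (x + y) = \<phi> x + \<phi> y" and scl: "\<And>c x. \<phi> (sc c x) = c * \<phi> x"
    and bd: "\<And>x. cmod (\<phi> x) \<le> K * nm x"
  shows "\<exists>v. \<forall>x. \<phi> x = ip x v"
proof (cases "\<forall>x. \<phi> x = 0")
  case True then show ?thesis by (intro exI[of _ 0]) simp
next
  case False
  then obtain x1 where x1: "\<phi> x1 \<noteq> 0" by blast
  have diff: "\<phi> (x - y) = \<phi> x - \<phi> y" for x y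
    using add[of "x - y" y] by simp
  have zero: "\<phi> 0 = 0" using add[of 0 0] by simp
  define x0 where "x0 = sc (1 / \<phi> x1) x1"
  have x0: "\<phi> x0 = 1" using x1 by (simp add: x0_def scl)
  define N where "N = {x. \<phi> x = 0}"
  have N0: "0 \<in> N" by (simp add: N_def zero)
  have Nadd: "x \<in> N \<Longrightarrow> y \<in> N \<Longrightarrow> x + y \<in> N" for x y by (simp add: N_def add)
  have Nscale: "x \<in> N \<Longrightarrow> sc c x \<in> N" for x c by (simp add: N_def scl)
  define D where "D = (\<lambda>y. (nm (x0 - y))^2) ` N"
  define d where "d = Inf D"
  have Dne: "D \<noteq> {}" using N0 by (auto simp: D_def)
  have Dbdd: "bdd_below D" unfolding D_def by (rule bdd_belowI[of _ 0]) auto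
  have dle: "y \<in> N \<Longrightarrow> d \<le> (nm (x0 - y))^2" for y
    unfolding d_def D_def by (rule cInf_lower) (use Dbdd D_def in auto)
  have "\<exists>y\<in>N. (nm (x0 - y))^2 < d + 1 / (Suc k)" for k :: nat
  proof -
    have "Inf D < d + 1 / Suc k" by (simp add: d_def)
    then obtain z where "z \<in> D" "z < d + 1 / Suc k" using cInf_lessD[OF Dne] by blast
    then show ?thesis by (auto simp: D_def)
  qed
  then obtain Y where Y: "\<And>k. Y k \<in> N" "\<And>k. (nm (x0 - Y k))^2 < d + 1 / Suc k"
    by metis
  have mid: "(nm (Y j - Y k))^2 \<le> 2 / Suc j + 2 / Suc k" for j k
  proof -
    define a where "a = x0 - Y j"
    define b where "b = x0 - Y k"
    define m where "m = sc (1/2) (Y j + Y k)"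
    have mN: "m \<in> N" unfolding m_def using Y(1) Nadd Nscale by blast
    have two: "sc 2 z = z + z" for z using vs.scale_left_distrib[of 1 1 z] by simp
    have "a + b = sc 2 (x0 - m)"
      by (simp add: a_def b_def m_def vs.scale_right_diff_distrib two algebra_simps)
    then have "(nm (a + b))^2 = 4 * (nm (x0 - m))^2" by (simp add: nm_scale power_mult_distrib)
    also have "\<dots> \<ge> 4 * d" using dle[OF mN] by simp
    finally have "4 * d \<le> (nm (a + b))^2" .
    moreover have "a - b = Y k - Y j" by (simp add: a_def b_def)
    moreover note parallelogram[of a b]
    moreover have "(nm a)^2 < d + 1 / Suc j" "(nm b)^2 < d + 1 / Suc k" using Y(2) by (auto simp: a_def b_def)
    ultimately have "(nm (Y k - Y j))^2 \<le> 2 / Suc j + 2 / Suc k" by simp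
    then show ?thesis using nm_diff_commute[of "Y j" "Y k"] by simp
  qed
  have "hcauchy ip Y" unfolding hcauchy_def
  proof (intro allI impI)
    fix e :: real assume e: "e > 0"
    obtain N0 :: nat where n: "4 / e^2 < real N0" by (meson reals_Archimedean2)
    have e2: "e^2 > 0" using e by simp
    have "0 < 4 / e^2" using e2 by simp
    then have N0pos: "real N0 > 0" using n by linarith
    have "4 < real N0 * e^2" using n e2 by (simp add: field_simps)
    then have "4 / real N0 < e^2" using N0pos by (simp add: field_simps)
    then have N0: "N0 > 0" "4 / N0 < e^2" using N0pos by auto
    have "nm (Y j - Y k) < e" if "j \<ge> N0" "k \<ge> N0" for j k
    proof -
      have "2 / Suc j \<le> 2 / real N0" "2 / Suc k \<le> 2 / real N0"
        using that N0 by (auto simp: frac_le)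
      then have "(nm (Y j - Y k))^2 < e^2" using mid[of j k] N0 by simp
      then show ?thesis using e by (simp add: power_less_imp_less_base)
    qed
    then show "\<exists>N. \<forall>m\<ge>N. \<forall>n\<ge>N. nm (Y m - Y n) < e" by blast
  qed
  then obtain y where y: "hlim ip Y y" using complete by blast
  have yN: "y \<in> N"
  proof -
    have "(\<lambda>k. \<phi> (Y k) - \<phi> y) \<longlonglongrightarrow> 0"
    proof (rule tends0_cmp)
      show "(\<lambda>k. K * nm (Y k - y)) \<longlonglongrightarrow> 0" using y unfolding hlim_def
        using tendsto_mult[OF tendsto_const[of K]] by fastforce
      show "norm (\<phi> (Y k) - \<phi> y) \<le> K * nm (Y k - y)" for k using bd[of "Y k - y"] by (simp add: diff)
    qed
    moreover have "\<phi> (Y k) = 0" for k using Y(1) by (simp add: N_def)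
    ultimately show ?thesis by (simp add: N_def LIMSEQ_const_iff)
  qed
  define w where "w = x0 - y"
  have wlim: "hlim ip (\<lambda>k. x0 - Y k) w" unfolding w_def by (rule hlim_diff[OF hlim_const y])
  have wd: "(nm w)^2 \<le> d"
  proof -
    have "(\<lambda>k. (nm (x0 - Y k))^2) \<longlonglongrightarrow> (nm w)^2" using hlim_nm[OF wlim] by (intro tendsto_power)
    moreover have "(\<lambda>k. 1 / real (Suc k)) \<longlonglongrightarrow> 0"
      using LIMSEQ_inverse_real_of_nat by (simp add: inverse_eq_divide)
    then have "(\<lambda>k. d + 1 / Suc k) \<longlonglongrightarrow> d + 0"
      by (intro tendsto_add tendsto_const)
    ultimately show ?thesis using Y(2) by (intro LIMSEQ_le[of _ _ "\<lambda>k. d + 1 / Suc k"]) (auto intro: less_imp_le)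
  qed
  have orth: "ip w m = 0" if m: "m \<in> N" for m
  proof (cases "m = 0")
    case True then show ?thesis by simp
  next
    case False
    define t where "t = ip w m / ip m m"
    have "y + sc t m \<in> N" using yN m Nadd Nscale by blast
    then have "d \<le> (nm (x0 - (y + sc t m)))^2" by (rule dle)
    also have "x0 - (y + sc t m) = w - sc t m" by (simp add: w_def)
    finally have "(nm w)^2 \<le> (nm (w - sc t m))^2" using wd by linarith
    also have "\<dots> = (nm w)^2 - (cmod (ip w m))^2 / Re (ip m m)"
      using proj_identity[OF False, of w] by (simp add: nm_sq t_def)
    finally have "(cmod (ip w m))^2 / Re (ip m m) \<le> 0" by simp
    moreover have "Re (ip m m) > 0" using False nm_sq[of m] nm_zero_iff[of m]
      by (metis nm_nonneg less_eq_real_def zero_less_power2)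
    ultimately have "(cmod (ip w m))^2 \<le> 0" by (simp add: divide_le_0_iff)
    then show ?thesis by simp
  qed
  have w0: "w \<noteq> 0" using x0 yN by (auto simp: w_def N_def diff)
  then have ww: "ip w w \<noteq> 0" using nm_sq[of w] nm_zero_iff[of w] ip_self_real[of w]
    by (metis Re_complex_of_real nm_nonneg power_zero_numeral zero_complex.sel(1) less_numeral_extra(3) zero_less_power2 order_less_le)
  define v where "v = sc (1 / cnj (ip w w)) w"
  have "\<phi> x = ip x v" for x
  proof -
    have py: "\<phi> y = 0" using yN by (simp add: N_def)
    have "x - sc (\<phi> x) w \<in> N" by (simp add: N_def diff scl w_def x0 py)
    then have "ip w (x - sc (\<phi> x) w) = 0" by (rule orth)
    then have "ip (x - sc (\<phi> x) w) w = 0" using ip_sym[of "x - sc (\<phi> x) w" w] by simp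
    then have "ip x w = \<phi> x * ip w w" by (simp add: ip_diff_left ip_scale_left)
    then show ?thesis using ww by (simp add: v_def ip_scale_right)
  qed
  then show ?thesis by blast
qed

end


definition lin_rel :: "(complex \<Rightarrow> 'a::ab_group_add \<Rightarrow> 'a) \<Rightarrow> (complex \<Rightarrow> 'b::ab_group_add \<Rightarrow> 'b) \<Rightarrow> ('a \<times> 'b) set \<Rightarrow> bool" where
  "lin_rel s1 s2 A \<longleftrightarrow> (0, 0) \<in> A \<and> (\<forall>x y u v. (x, y) \<in> A \<and> (u, v) \<in> A \<longrightarrow> (x + u, y + v) \<in> A) \<and>
     (\<forall>c x y. (x, y) \<in> A \<longrightarrow> (s1 c x, s2 c y) \<in> A)"

lemma lin_op_iff: "lin_op s1 s2 A \<longleftrightarrow> is_graph A \<and> lin_rel s1 s2 A"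
  unfolding lin_op_def lin_rel_def by blast

lemma lin_rel_zero: "lin_rel s1 s2 A \<Longrightarrow> (0, 0) \<in> A" by (simp add: lin_rel_def)
lemma lin_rel_add: "lin_rel s1 s2 A \<Longrightarrow> (x, y) \<in> A \<Longrightarrow> (u, v) \<in> A \<Longrightarrow> (x + u, y + v) \<in> A"
  by (simp add: lin_rel_def)
lemma lin_rel_scale: "lin_rel s1 s2 A \<Longrightarrow> (x, y) \<in> A \<Longrightarrow> (s1 c x, s2 c y) \<in> A"
  by (simp add: lin_rel_def)

lemma lin_rel_minus:
  assumes "vector_space s1" "vector_space s2" "lin_rel s1 s2 A" "(x, y) \<in> A"
  shows "(- x, - y) \<in> A"
proof -
  interpret v1: vector_space s1 by fact
  interpret v2: vector_space s2 by fact
  show ?thesis using lin_rel_scale[OF assms(3,4), of "-1"] by simp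
qed

lemma lin_rel_diff:
  assumes "vector_space s1" "vector_space s2" "lin_rel s1 s2 A" "(x, y) \<in> A" "(u, v) \<in> A"
  shows "(x - u, y - v) \<in> A"
  using lin_rel_add[OF assms(3,4) lin_rel_minus[OF assms(1,2,3,5)]] by simp

lemma lin_rel_comp: "lin_rel s2 s3 B \<Longrightarrow> lin_rel s1 s2 A \<Longrightarrow> lin_rel s1 s3 (op_comp B A)"
  unfolding lin_rel_def op_comp_def by blast

lemma lin_rel_inv: "lin_rel s1 s2 A \<Longrightarrow> lin_rel s2 s1 (op_inv A)"
  unfolding lin_rel_def op_inv_def by blast

lemma lin_rel_shift:
  assumes "vector_space s" "lin_rel s s A" shows "lin_rel s s (op_shift s A z)"
proof -
  interpret v: vector_space s by fact
  show ?thesis unfolding lin_rel_def op_shift_def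
  proof (intro conjI allI impI)
    show "(0, 0) \<in> {(x, y - s z x) |x y. (x, y) \<in> A}" using lin_rel_zero[OF assms(2)] by force
  next
    fix x y u v assume "(x, y) \<in> {(x, y - s z x) |x y. (x, y) \<in> A} \<and> (u, v) \<in> {(x, y - s z x) |x y. (x, y) \<in> A}"
    then obtain y' v' where "(x, y') \<in> A" "(u, v') \<in> A" "y = y' - s z x" "v = v' - s z u" by blast
    then show "(x + u, y + v) \<in> {(x, y - s z x) |x y. (x, y) \<in> A}"
      using lin_rel_add[OF assms(2)] by (force simp: v.scale_right_distrib algebra_simps)
  next
    fix c x y assume "(x, y) \<in> {(x, y - s z x) |x y. (x, y) \<in> A}"
    then obtain y' where "(x, y') \<in> A" "y = y' - s z x" by blast
    then show "(s c x, s c y) \<in> {(x, y - s z x) |x y. (x, y) \<in> A}"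
      using lin_rel_scale[OF assms(2)] v.scale_left_commute
      by (force simp: v.scale_right_diff_distrib)
  qed
qed

lemma lin_rel_Iminus:
  assumes "vector_space s" "lin_rel s s A" shows "lin_rel s s (op_I_minus A)"
proof -
  interpret v: vector_space s by fact
  show ?thesis unfolding lin_rel_def op_I_minus_def
  proof (intro conjI allI impI)
    show "(0, 0) \<in> {(x, x - y) |x y. (x, y) \<in> A}" using lin_rel_zero[OF assms(2)] by force
  next
    fix x y u v assume "(x, y) \<in> {(x, x - y) |x y. (x, y) \<in> A} \<and> (u, v) \<in> {(x, x - y) |x y. (x, y) \<in> A}"
    then obtain y' v' where "(x, y') \<in> A" "(u, v') \<in> A" "y = x - y'" "v = u - v'" by blast
    then show "(x + u, y + v) \<in> {(x, x - y) |x y. (x, y) \<in> A}"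
      using lin_rel_add[OF assms(2)] by (force simp: algebra_simps)
  next
    fix c x y assume "(x, y) \<in> {(x, x - y) |x y. (x, y) \<in> A}"
    then obtain y' where "(x, y') \<in> A" "y = x - y'" by blast
    then show "(s c x, s c y) \<in> {(x, x - y) |x y. (x, y) \<in> A}"
      using lin_rel_scale[OF assms(2)] by (force simp: v.scale_right_diff_distrib)
  qed
qed

lemma lin_rel_plus:
  assumes "vector_space s2" "lin_rel s1 s2 A" "lin_rel s1 s2 B" shows "lin_rel s1 s2 (op_plus A B)"
proof -
  interpret v: vector_space s2 by fact
  show ?thesis unfolding lin_rel_def op_plus_def
  proof (intro conjI allI impI)
    show "(0, 0) \<in> {(x, y + z) |x y z. (x, y) \<in> A \<and> (x, z) \<in> B}"
      using lin_rel_zero[OF assms(2)] lin_rel_zero[OF assms(3)] by force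
  next
    fix x y u v assume "(x, y) \<in> {(x, y + z) |x y z. (x, y) \<in> A \<and> (x, z) \<in> B} \<and>
        (u, v) \<in> {(x, y + z) |x y z. (x, y) \<in> A \<and> (x, z) \<in> B}"
    then obtain y1 y2 v1 v2 where h: "(x, y1) \<in> A" "(x, y2) \<in> B" "(u, v1) \<in> A" "(u, v2) \<in> B"
      "y = y1 + y2" "v = v1 + v2" by blast
    have "(x + u, y1 + v1) \<in> A" "(x + u, y2 + v2) \<in> B"
      using lin_rel_add[OF assms(2) h(1,3)] lin_rel_add[OF assms(3) h(2,4)] by auto
    moreover have "y + v = (y1 + v1) + (y2 + v2)" using h by (simp add: algebra_simps)
    ultimately show "(x + u, y + v) \<in> {(x, y + z) |x y z. (x, y) \<in> A \<and> (x, z) \<in> B}"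
      by blast
  next
    fix c x y assume "(x, y) \<in> {(x, y + z) |x y z. (x, y) \<in> A \<and> (x, z) \<in> B}"
    then obtain y1 y2 where "(x, y1) \<in> A" "(x, y2) \<in> B" "y = y1 + y2" by blast
    then show "(s1 c x, s2 c y) \<in> {(x, y + z) |x y z. (x, y) \<in> A \<and> (x, z) \<in> B}"
      using lin_rel_scale[OF assms(2)] lin_rel_scale[OF assms(3)] by (force simp: v.scale_right_distrib)
  qed
qed

lemma is_graph_comp: "is_graph A \<Longrightarrow> is_graph B \<Longrightarrow> is_graph (op_comp B A)"
  unfolding is_graph_def op_comp_def by blast

lemma is_graph_plus: "is_graph A \<Longrightarrow> is_graph B \<Longrightarrow> is_graph (op_plus A B)"
  unfolding is_graph_def op_plus_def by blast

lemma op_comp_iff: "(x, z) \<in> op_comp B A \<longleftrightarrow> (\<exists>y. (x, y) \<in> A \<and> (y, z) \<in> B)"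
  by (simp add: op_comp_def)

lemma op_inv_iff: "(x, y) \<in> op_inv A \<longleftrightarrow> (y, x) \<in> A"
  by (simp add: op_inv_def)

lemma op_shift_iff: "(x, y) \<in> op_shift s A z \<longleftrightarrow> (\<exists>y'. (x, y') \<in> A \<and> y = y' - s z x)"
  by (auto simp: op_shift_def)

lemma op_plus_iff: "(x, y) \<in> op_plus A B \<longleftrightarrow> (\<exists>y1 y2. (x, y1) \<in> A \<and> (x, y2) \<in> B \<and> y = y1 + y2)"
  by (auto simp: op_plus_def)

lemma op_I_minus_iff: "(x, y) \<in> op_I_minus A \<longleftrightarrow> (\<exists>y'. (x, y') \<in> A \<and> y = x - y')"
  by (auto simp: op_I_minus_def)

lemma op_dom_iff: "x \<in> op_dom A \<longleftrightarrow> (\<exists>y. (x, y) \<in> A)"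
  by (force simp: op_dom_def)

lemma op_ran_iff: "y \<in> op_ran A \<longleftrightarrow> (\<exists>x. (x, y) \<in> A)"
  by (force simp: op_ran_def)

context hilb2 begin

lemma subset_closure: "A \<subseteq> op_closure ip1 ip2 A"
  unfolding op_closure_def using H1.hlim_const H2.hlim_const by fast

lemma closure_lin_rel:
  assumes "lin_rel sc1 sc2 A" shows "lin_rel sc1 sc2 (op_closure ip1 ip2 A)"
  unfolding lin_rel_def
proof (intro conjI allI impI)
  show "(0, 0) \<in> op_closure ip1 ip2 A" using subset_closure lin_rel_zero[OF assms] by blast
next
  fix x y u v assume "(x, y) \<in> op_closure ip1 ip2 A \<and> (u, v) \<in> op_closure ip1 ip2 A"
  then obtain X Y U V where "\<forall>n. (X n, Y n) \<in> A" "hlim ip1 X x" "hlim ip2 Y y"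
    "\<forall>n. (U n, V n) \<in> A" "hlim ip1 U u" "hlim ip2 V v" unfolding op_closure_def by blast
  then show "(x + u, y + v) \<in> op_closure ip1 ip2 A" unfolding op_closure_def
    using lin_rel_add[OF assms] H1.hlim_add H2.hlim_add
    by (auto intro!: exI[of _ "\<lambda>n. X n + U n"] exI[of _ "\<lambda>n. Y n + V n"])
next
  fix c x y assume "(x, y) \<in> op_closure ip1 ip2 A"
  then obtain X Y where "\<forall>n. (X n, Y n) \<in> A" "hlim ip1 X x" "hlim ip2 Y y"
    unfolding op_closure_def by blast
  then show "(sc1 c x, sc2 c y) \<in> op_closure ip1 ip2 A" unfolding op_closure_def
    using lin_rel_scale[OF assms] H1.hlim_scale H2.hlim_scale
    by (auto intro!: exI[of _ "\<lambda>n. sc1 c (X n)"] exI[of _ "\<lambda>n. sc2 c (Y n)"])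
qed

lemma bounded_cont:
  assumes "lin_rel sc1 sc2 A" "\<And>x y. (x, y) \<in> A \<Longrightarrow> H2.nm y \<le> K * H1.nm x"
    "\<And>n. (X n, Y n) \<in> A" "hlim ip1 X x" "(x, y) \<in> A"
  shows "hlim ip2 Y y"
proof -
  have b: "H2.nm (Y n - y) \<le> K * H1.nm (X n - x)" for n
  proof -
    have "(X n - x, Y n - y) \<in> A"
      by (rule lin_rel_diff[OF H1.vs.vector_space_axioms H2.vs.vector_space_axioms assms(1,3,5)])
    then show ?thesis using assms(2) by blast
  qed
  have "(\<lambda>n. K * H1.nm (X n - x)) \<longlonglongrightarrow> 0" using assms(4) unfolding hlim_def
    by (rule tendsto_mult_right_zero)
  then show ?thesis unfolding hlim_def by (rule tends0_cmp) (use b in simp)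
qed

end

locale hilb3 = hilb2 sc1 ip1 sc2 ip2 + H3: hilb sc3 ip3
  for sc1 :: "complex \<Rightarrow> 'a::ab_group_add \<Rightarrow> 'a" and ip1
  and sc2 :: "complex \<Rightarrow> 'b::ab_group_add \<Rightarrow> 'b" and ip2
  and sc3 :: "complex \<Rightarrow> 'c::ab_group_add \<Rightarrow> 'c" and ip3
begin

lemma comp_closed:
  assumes linA: "lin_rel sc1 sc2 A" and grA: "is_graph A" and domA: "op_dom A = UNIV"
    and bdA: "\<And>x y. (x, y) \<in> A \<Longrightarrow> H2.nm y \<le> K * H1.nm x"
    and clB: "closable ip2 ip3 B" and dom: "op_dom (op_comp B A) = UNIV"
  shows "closed_op ip1 ip3 (op_comp B A)"
  unfolding closed_op_def
proof
  fix p assume "p \<in> op_closure ip1 ip3 (op_comp B A)"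
  then obtain x y X Y where p: "p = (x, y)" and XY: "\<And>n. (X n, Y n) \<in> op_comp B A" "hlim ip1 X x" "hlim ip3 Y y"
    unfolding op_closure_def by blast
  obtain a where a: "\<And>n. (X n, a n) \<in> A" "\<And>n. (a n, Y n) \<in> B" using XY(1) unfolding op_comp_def by simp metis
  have "x \<in> op_dom (op_comp B A)" using dom by simp
  then obtain y' where "(x, y') \<in> op_comp B A" unfolding op_dom_iff by blast
  then obtain a' where a': "(x, a') \<in> A" "(a', y') \<in> B" unfolding op_comp_def by blast
  have alim: "hlim ip2 a a'"
    by (rule hilb2.bounded_cont[OF hilb2_axioms linA bdA a(1) XY(2) a'(1)])
  have "(a', y) \<in> op_closure ip2 ip3 B" unfolding op_closure_def using a(2) alim XY(3) by blast
  moreover have "(a', y') \<in> op_closure ip2 ip3 B"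
    using hilb2.subset_closure[of sc2 ip2 sc3 ip3] H2.hilb_axioms H3.hilb_axioms a'(2)
    by (auto simp: hilb2_def)
  ultimately have "y = y'" using clB unfolding closable_def is_graph_def by blast
  then show "p \<in> op_comp B A" using a' p unfolding op_comp_def by blast
qed

end


lemma op_ran_UNIV: "op_ran A = UNIV \<longleftrightarrow> (\<forall>y. \<exists>x. (x, y) \<in> A)"
  by (auto simp: op_ran_iff)

lemma graph_eq: "L \<subseteq> R \<Longrightarrow> is_graph R \<Longrightarrow> (\<And>h. \<exists>f. (h, f) \<in> L) \<Longrightarrow> L = R"
  unfolding is_graph_def by (metis pred_equals_eq2 subrelI subset_antisym subset_iff)

lemma op_compI: "(x, y) \<in> A \<Longrightarrow> (y, z) \<in> B \<Longrightarrow> (x, z) \<in> op_comp B A"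
  by (auto simp: op_comp_iff)

lemma op_compE: "(x, z) \<in> op_comp B A \<Longrightarrow> (\<And>y. (x, y) \<in> A \<Longrightarrow> (y, z) \<in> B \<Longrightarrow> P) \<Longrightarrow> P"
  by (auto simp: op_comp_iff)

lemma op_dom_UNIV: "op_dom A = UNIV \<longleftrightarrow> (\<forall>x. \<exists>y. (x, y) \<in> A)"
  by (auto simp: op_dom_iff)

lemma res_inj: "z \<in> resolvent_set sc ip A \<Longrightarrow> (x, y) \<in> A \<Longrightarrow> (x', y') \<in> A \<Longrightarrow>
    y - sc z x = y' - sc z x' \<Longrightarrow> x = x'"
  unfolding resolvent_set_def is_graph_def op_inv_iff op_shift_iff by blast

lemma res_surj: "z \<in> resolvent_set sc ip A \<Longrightarrow> \<exists>x y. (x, y) \<in> A \<and> h = y - sc z x"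
  unfolding resolvent_set_def op_ran_UNIV op_shift_iff by blast

lemma res_bd: "z \<in> resolvent_set sc ip A \<Longrightarrow> \<exists>K. \<forall>x y. (x, y) \<in> A \<longrightarrow> hnorm ip x \<le> K * hnorm ip (y - sc z x)"
  unfolding resolvent_set_def op_inv_iff op_shift_iff by blast

lemma res_intro:
  assumes "\<And>x y x' y'. (x, y) \<in> A \<Longrightarrow> (x', y') \<in> A \<Longrightarrow> y - sc z x = y' - sc z x' \<Longrightarrow> x = x'"
    "\<And>h. \<exists>x y. (x, y) \<in> A \<and> h = y - sc z x"
    "\<And>x y. (x, y) \<in> A \<Longrightarrow> hnorm ip x \<le> K * hnorm ip (y - sc z x)"
  shows "z \<in> resolvent_set sc ip A"
proof -
  have "is_graph (op_inv (op_shift sc A z))"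
    unfolding is_graph_def op_inv_iff op_shift_iff using assms(1) by blast
  moreover have "op_ran (op_shift sc A z) = UNIV"
    unfolding op_ran_UNIV op_shift_iff using assms(2) by blast
  moreover have "\<forall>x y. (y, x) \<in> op_inv (op_shift sc A z) \<longrightarrow> hnorm ip x \<le> K * hnorm ip y"
    unfolding op_inv_iff op_shift_iff using assms(3) by blast
  ultimately show ?thesis unfolding resolvent_set_def by blast
qed

lemma lin_on_props:
  assumes "vector_space s1" "vector_space s2" "lin_on s1 s2 D f"
    and D: "\<And>x y. x \<in> D \<Longrightarrow> y \<in> D \<Longrightarrow> x + y \<in> D" "\<And>c x. x \<in> D \<Longrightarrow> s1 c x \<in> D"
  shows "x \<in> D \<Longrightarrow> y \<in> D \<Longrightarrow> f (x + y) = f x + f y"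
    and "x \<in> D \<Longrightarrow> f (s1 c x) = s2 c (f x)"
    and "x \<in> D \<Longrightarrow> f (- x) = - f x"
    and "x \<in> D \<Longrightarrow> y \<in> D \<Longrightarrow> f (x - y) = f x - f y"
    and "x \<in> D \<Longrightarrow> f 0 = 0"
proof -
  interpret v1: vector_space s1 by fact
  interpret v2: vector_space s2 by fact
  have a: "\<And>x y. x \<in> D \<Longrightarrow> y \<in> D \<Longrightarrow> f (x + y) = f x + f y" and
       s: "\<And>c x. x \<in> D \<Longrightarrow> f (s1 c x) = s2 c (f x)" using assms(3) by (auto simp: lin_on_def)
  show "x \<in> D \<Longrightarrow> y \<in> D \<Longrightarrow> f (x + y) = f x + f y" by (rule a)
  show "x \<in> D \<Longrightarrow> f (s1 c x) = s2 c (f x)" by (rule s)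
  show m: "f (- x) = - f x" if "x \<in> D" for x using s[OF that, of "-1"] by simp
  show "x \<in> D \<Longrightarrow> y \<in> D \<Longrightarrow> f (x - y) = f x - f y"
    using a[of x "- y"] m[of y] D(2)[of y "-1"] by simp
  show "x \<in> D \<Longrightarrow> f 0 = 0" using s[of x 0] by simp
qed

locale setting = hilb2 scH ipH scG ipG
  for scH :: "complex \<Rightarrow> 'h::ab_group_add \<Rightarrow> 'h" and ipH
  and scG :: "complex \<Rightarrow> 'g::ab_group_add \<Rightarrow> 'g" and ipG +
  fixes T Tt :: "('h \<times> 'h) set" and \<Gamma>0 \<Gamma>1 \<Gamma>t0 \<Gamma>t1 :: "'h \<Rightarrow> 'g" and B1 B2 :: "('g \<times> 'g) set"
  assumes T_lin: "lin_op scH scH T" and Tt_lin: "lin_op scH scH Tt"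
    and lin_\<Gamma>0: "lin_on scH scG (op_dom T) \<Gamma>0" and lin_\<Gamma>1: "lin_on scH scG (op_dom T) \<Gamma>1"
    and lin_\<Gamma>t0: "lin_on scH scG (op_dom Tt) \<Gamma>t0" and lin_\<Gamma>t1: "lin_on scH scG (op_dom Tt) \<Gamma>t1"
    and green: "\<forall>f u g v. (f, u) \<in> T \<longrightarrow> (g, v) \<in> Tt \<longrightarrow>
                 ipH u g - ipH f v = ipG (\<Gamma>1 f) (\<Gamma>t0 g) - ipG (\<Gamma>0 f) (\<Gamma>t1 g)"
    and Dt: "hdense ipG (\<Gamma>t0 ` op_dom Tt)"
    and M1: "op_adj ipH ipH (ker_restr T \<Gamma>0) = ker_restr Tt \<Gamma>t0"
    and B1_lin: "lin_op scG scG B1" and B2_lin: "lin_op scG scG B2"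
    and B1_cl: "closable ipG ipG B1" and B2_cl: "closable ipG ipG B2"
    and hv: "\<Gamma>1 ` op_dom (ker_restr T \<Gamma>0) \<subseteq> op_dom (op_comp B1 B2)"
begin

abbreviation "A0 \<equiv> ker_restr T \<Gamma>0"
abbreviation "At0 \<equiv> ker_restr Tt \<Gamma>t0"
abbreviation "gam z \<equiv> gamma_field scH T \<Gamma>0 z"
abbreviation "gamt z \<equiv> gamma_field scH Tt \<Gamma>t0 z"
abbreviation "Wf z \<equiv> weyl scH T \<Gamma>0 \<Gamma>1 z"
abbreviation "AB \<equiv> ext_B T \<Gamma>0 \<Gamma>1 B1 B2"

sublocale GG: hilb2 scG ipG scG ipG by (simp add: hilb2_def H2.hilb_axioms)
sublocale HH: hilb2 scH ipH scH ipH by (simp add: hilb2_def H1.hilb_axioms)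
sublocale GH: hilb2 scG ipG scH ipH by (simp add: hilb2_def H1.hilb_axioms H2.hilb_axioms)
sublocale HGG: hilb3 scH ipH scG ipG scG ipG by (simp add: hilb3_def hilb2_def H1.hilb_axioms H2.hilb_axioms)
sublocale HGH: hilb3 scH ipH scG ipG scH ipH by (simp add: hilb3_def hilb2_def H1.hilb_axioms H2.hilb_axioms)

lemmas vsH = H1.vs.vector_space_axioms
lemmas vsG = H2.vs.vector_space_axioms

lemma T_rel: "lin_rel scH scH T" using T_lin by (simp add: lin_op_iff)
lemma Tt_rel: "lin_rel scH scH Tt" using Tt_lin by (simp add: lin_op_iff)
lemma B1_rel: "lin_rel scG scG B1" using B1_lin by (simp add: lin_op_iff)
lemma B2_rel: "lin_rel scG scG B2" using B2_lin by (simp add: lin_op_iff)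
lemma B1_gr: "is_graph B1" using B1_lin by (simp add: lin_op_iff)
lemma B2_gr: "is_graph B2" using B2_lin by (simp add: lin_op_iff)

lemma domT_add: "f \<in> op_dom T \<Longrightarrow> g \<in> op_dom T \<Longrightarrow> f + g \<in> op_dom T"
  using lin_rel_add[OF T_rel] by (meson op_dom_iff)
lemma domT_scale: "f \<in> op_dom T \<Longrightarrow> scH c f \<in> op_dom T"
  using lin_rel_scale[OF T_rel] by (meson op_dom_iff)
lemma domTt_add: "f \<in> op_dom Tt \<Longrightarrow> g \<in> op_dom Tt \<Longrightarrow> f + g \<in> op_dom Tt"
  using lin_rel_add[OF Tt_rel] by (meson op_dom_iff)
lemma domTt_scale: "f \<in> op_dom Tt \<Longrightarrow> scH c f \<in> op_dom Tt"
  using lin_rel_scale[OF Tt_rel] by (meson op_dom_iff)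

lemma G0_add: "f \<in> op_dom T \<Longrightarrow> g \<in> op_dom T \<Longrightarrow> \<Gamma>0 (f + g) = \<Gamma>0 f + \<Gamma>0 g"
  using lin_\<Gamma>0 by (simp add: lin_on_def)
lemma G0_scale: "f \<in> op_dom T \<Longrightarrow> \<Gamma>0 (scH c f) = scG c (\<Gamma>0 f)"
  using lin_\<Gamma>0 by (simp add: lin_on_def)
lemma G0_minus: "f \<in> op_dom T \<Longrightarrow> \<Gamma>0 (- f) = - \<Gamma>0 f"
  using G0_scale[of f "-1"] by simp
lemma G0_diff: "f \<in> op_dom T \<Longrightarrow> g \<in> op_dom T \<Longrightarrow> \<Gamma>0 (f - g) = \<Gamma>0 f - \<Gamma>0 g"
  using G0_add[of f "- g"] G0_minus[of g] domT_scale[of g "-1"] by simp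
lemma G1_add: "f \<in> op_dom T \<Longrightarrow> g \<in> op_dom T \<Longrightarrow> \<Gamma>1 (f + g) = \<Gamma>1 f + \<Gamma>1 g"
  using lin_\<Gamma>1 by (simp add: lin_on_def)
lemma G1_scale: "f \<in> op_dom T \<Longrightarrow> \<Gamma>1 (scH c f) = scG c (\<Gamma>1 f)"
  using lin_\<Gamma>1 by (simp add: lin_on_def)
lemma G1_minus: "f \<in> op_dom T \<Longrightarrow> \<Gamma>1 (- f) = - \<Gamma>1 f"
  using G1_scale[of f "-1"] by simp
lemma G1_diff: "f \<in> op_dom T \<Longrightarrow> g \<in> op_dom T \<Longrightarrow> \<Gamma>1 (f - g) = \<Gamma>1 f - \<Gamma>1 g"
  using G1_add[of f "- g"] G1_minus[of g] domT_scale[of g "-1"] by simp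
lemma Gt0_add: "f \<in> op_dom Tt \<Longrightarrow> g \<in> op_dom Tt \<Longrightarrow> \<Gamma>t0 (f + g) = \<Gamma>t0 f + \<Gamma>t0 g"
  using lin_\<Gamma>t0 by (simp add: lin_on_def)
lemma Gt0_scale: "f \<in> op_dom Tt \<Longrightarrow> \<Gamma>t0 (scH c f) = scG c (\<Gamma>t0 f)"
  using lin_\<Gamma>t0 by (simp add: lin_on_def)
lemma Gt0_minus: "f \<in> op_dom Tt \<Longrightarrow> \<Gamma>t0 (- f) = - \<Gamma>t0 f"
  using Gt0_scale[of f "-1"] by simp
lemma Gt0_diff: "f \<in> op_dom Tt \<Longrightarrow> g \<in> op_dom Tt \<Longrightarrow> \<Gamma>t0 (f - g) = \<Gamma>t0 f - \<Gamma>t0 g"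
  using Gt0_add[of f "- g"] Gt0_minus[of g] domTt_scale[of g "-1"] by simp
lemma Gt1_add: "f \<in> op_dom Tt \<Longrightarrow> g \<in> op_dom Tt \<Longrightarrow> \<Gamma>t1 (f + g) = \<Gamma>t1 f + \<Gamma>t1 g"
  using lin_\<Gamma>t1 by (simp add: lin_on_def)
lemma Gt1_scale: "f \<in> op_dom Tt \<Longrightarrow> \<Gamma>t1 (scH c f) = scG c (\<Gamma>t1 f)"
  using lin_\<Gamma>t1 by (simp add: lin_on_def)
lemma Gt1_minus: "f \<in> op_dom Tt \<Longrightarrow> \<Gamma>t1 (- f) = - \<Gamma>t1 f"
  using Gt1_scale[of f "-1"] by simp
lemma Gt1_diff: "f \<in> op_dom Tt \<Longrightarrow> g \<in> op_dom Tt \<Longrightarrow> \<Gamma>t1 (f - g) = \<Gamma>t1 f - \<Gamma>t1 g"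
  using Gt1_add[of f "- g"] Gt1_minus[of g] domTt_scale[of g "-1"] by simp

lemma inT: "(f, u) \<in> T \<Longrightarrow> f \<in> op_dom T" by (auto simp: op_dom_iff)
lemma inTt: "(f, u) \<in> Tt \<Longrightarrow> f \<in> op_dom Tt" by (auto simp: op_dom_iff)
lemma T00: "(0, 0) \<in> T" by (rule lin_rel_zero[OF T_rel])
lemma Tt00: "(0, 0) \<in> Tt" by (rule lin_rel_zero[OF Tt_rel])
lemma G0_0: "\<Gamma>0 0 = 0" using G0_scale[OF inT[OF T00], of 0] by simp
lemma G1_0: "\<Gamma>1 0 = 0" using G1_scale[OF inT[OF T00], of 0] by simp
lemma Gt0_0: "\<Gamma>t0 0 = 0" using Gt0_scale[OF inTt[OF Tt00], of 0] by simp
lemma Gt1_0: "\<Gamma>t1 0 = 0" using Gt1_scale[OF inTt[OF Tt00], of 0] by simp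

lemma A0_iff: "(f, u) \<in> A0 \<longleftrightarrow> (f, u) \<in> T \<and> \<Gamma>0 f = 0"
  by (simp add: ker_restr_def op_restrict_def)
lemma At0_iff: "(f, u) \<in> At0 \<longleftrightarrow> (f, u) \<in> Tt \<and> \<Gamma>t0 f = 0"
  by (simp add: ker_restr_def op_restrict_def)
lemma gam_iff: "(a, f) \<in> gam z \<longleftrightarrow> (f, scH z f) \<in> T \<and> a = \<Gamma>0 f"
  by (auto simp: gamma_field_def)
lemma gamt_iff: "(a, f) \<in> gamt z \<longleftrightarrow> (f, scH z f) \<in> Tt \<and> a = \<Gamma>t0 f"
  by (auto simp: gamma_field_def)
lemma Wf_iff: "(a, b) \<in> Wf z \<longleftrightarrow> (\<exists>f. (f, scH z f) \<in> T \<and> a = \<Gamma>0 f \<and> b = \<Gamma>1 f)"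
  by (auto simp: weyl_def)
lemma AB_iff: "(f, u) \<in> AB \<longleftrightarrow> (f, u) \<in> T \<and> (\<Gamma>1 f, \<Gamma>0 f) \<in> op_comp B1 B2"
  by (simp add: ext_B_def)

lemma A0_rel: "lin_rel scH scH A0"
  unfolding lin_rel_def A0_iff
proof (intro conjI allI impI)
  show "(0, 0) \<in> T" "\<Gamma>0 0 = 0" by (rule T00, rule G0_0)
  fix x y u v assume a: "((x, y) \<in> T \<and> \<Gamma>0 x = 0) \<and> (u, v) \<in> T \<and> \<Gamma>0 u = 0"
  then show "(x + u, y + v) \<in> T" using lin_rel_add[OF T_rel] by blast
  show "\<Gamma>0 (x + u) = 0" using a G0_add[OF inT inT] by auto
next
  fix c x y assume a: "(x, y) \<in> T \<and> \<Gamma>0 x = 0"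
  then show "(scH c x, scH c y) \<in> T" using lin_rel_scale[OF T_rel] by blast
  show "\<Gamma>0 (scH c x) = 0" using a G0_scale[OF inT] by auto
qed

lemma ker_lin: "(f, scH z f) \<in> T \<Longrightarrow> (g, scH z g) \<in> T \<Longrightarrow> (f + g, scH z (f + g)) \<in> T"
  using lin_rel_add[OF T_rel] by (simp add: H1.vs.scale_right_distrib)
lemma ker_scale: "(f, scH z f) \<in> T \<Longrightarrow> (scH c f, scH z (scH c f)) \<in> T"
  using lin_rel_scale[OF T_rel] by (metis H1.vs.scale_left_commute)
lemma ker_diff: "(f, scH z f) \<in> T \<Longrightarrow> (g, scH z g) \<in> T \<Longrightarrow> (f - g, scH z (f - g)) \<in> T"
  using lin_rel_diff[OF vsH vsH T_rel] by (simp add: H1.vs.scale_right_diff_distrib)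

lemma Wf_rel: "lin_rel scG scG (Wf z)"
  unfolding lin_rel_def Wf_iff
proof (intro conjI allI impI)
  show "\<exists>f. (f, scH z f) \<in> T \<and> 0 = \<Gamma>0 f \<and> 0 = \<Gamma>1 f" using T00 G0_0 G1_0 by (intro exI[of _ 0]) auto
next
  fix x y u v assume "(\<exists>f. (f, scH z f) \<in> T \<and> x = \<Gamma>0 f \<and> y = \<Gamma>1 f) \<and> (\<exists>f. (f, scH z f) \<in> T \<and> u = \<Gamma>0 f \<and> v = \<Gamma>1 f)"
  then obtain f g where "(f, scH z f) \<in> T" "x = \<Gamma>0 f" "y = \<Gamma>1 f" "(g, scH z g) \<in> T" "u = \<Gamma>0 g" "v = \<Gamma>1 g" by blast
  then show "\<exists>f. (f, scH z f) \<in> T \<and> x + u = \<Gamma>0 f \<and> y + v = \<Gamma>1 f"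
    using ker_lin G0_add G1_add inT by (intro exI[of _ "f + g"]) metis
next
  fix c x y assume "\<exists>f. (f, scH z f) \<in> T \<and> x = \<Gamma>0 f \<and> y = \<Gamma>1 f"
  then obtain f where "(f, scH z f) \<in> T" "x = \<Gamma>0 f" "y = \<Gamma>1 f" by blast
  then show "\<exists>f. (f, scH z f) \<in> T \<and> scG c x = \<Gamma>0 f \<and> scG c y = \<Gamma>1 f"
    using ker_scale G0_scale G1_scale inT by (intro exI[of _ "scH c f"]) metis
qed

lemma gam_rel: "lin_rel scG scH (gam z)"
  unfolding lin_rel_def gam_iff
  using ker_lin ker_scale G0_add G0_scale inT T00 G0_0 by (auto simp: H1.vs.scale_zero_right)

lemma AB_rel: "lin_rel scH scH AB"
proof -
  have BB: "lin_rel scG scG (op_comp B1 B2)" by (rule lin_rel_comp[OF B1_rel B2_rel])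
  show ?thesis
    unfolding lin_rel_def AB_iff
  proof (intro conjI allI impI)
    show "(0, 0) \<in> T" by (rule T00)
    show "(\<Gamma>1 0, \<Gamma>0 0) \<in> op_comp B1 B2" using G0_0 G1_0 lin_rel_zero[OF BB] by simp
    fix x y u v assume a: "((x, y) \<in> T \<and> (\<Gamma>1 x, \<Gamma>0 x) \<in> op_comp B1 B2) \<and>
         (u, v) \<in> T \<and> (\<Gamma>1 u, \<Gamma>0 u) \<in> op_comp B1 B2"
    then show "(x + u, y + v) \<in> T" using lin_rel_add[OF T_rel] by blast
    show "(\<Gamma>1 (x + u), \<Gamma>0 (x + u)) \<in> op_comp B1 B2"
      using a G0_add[OF inT inT] G1_add[OF inT inT] lin_rel_add[OF BB] by auto
  next
    fix c x y assume a: "(x, y) \<in> T \<and> (\<Gamma>1 x, \<Gamma>0 x) \<in> op_comp B1 B2"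
    then show "(scH c x, scH c y) \<in> T" using lin_rel_scale[OF T_rel] by blast
    show "(\<Gamma>1 (scH c x), \<Gamma>0 (scH c x)) \<in> op_comp B1 B2"
      using a G0_scale[OF inT] G1_scale[OF inT] lin_rel_scale[OF BB] by auto
  qed
qed


abbreviation "rho z \<equiv> z \<in> resolvent_set scH ipH A0"

lemma R_ex: "rho z \<Longrightarrow> \<exists>f. (f, h + scH z f) \<in> A0"
  using res_surj[of z scH ipH A0 h] by (metis add_diff_cancel diff_add_cancel)

lemma R_uniq: "rho z \<Longrightarrow> (f, h + scH z f) \<in> A0 \<Longrightarrow> (f', h + scH z f') \<in> A0 \<Longrightarrow> f = f'"
  using res_inj[of z scH ipH A0 f "h + scH z f" f' "h + scH z f'"] by simp

lemma R_bd: "rho z \<Longrightarrow> \<exists>K. \<forall>f h. (f, h + scH z f) \<in> A0 \<longrightarrow> H1.nm f \<le> K * H1.nm h"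
  using res_bd[of z scH ipH A0] by (metis add_diff_cancel)

lemma decomp:
  assumes z: "rho z" and f: "(f, u) \<in> T"
  shows "\<exists>f0 g. (f0, (u - scH z f) + scH z f0) \<in> A0 \<and> (g, scH z g) \<in> T \<and> f = f0 + g"
proof -
  obtain f0 where f0: "(f0, (u - scH z f) + scH z f0) \<in> A0" using R_ex[OF z] by blast
  have "(f0, (u - scH z f) + scH z f0) \<in> T" using f0 by (simp add: A0_iff)
  then have "(f - f0, u - ((u - scH z f) + scH z f0)) \<in> T"
    by (rule lin_rel_diff[OF vsH vsH T_rel f])
  moreover have "u - ((u - scH z f) + scH z f0) = scH z (f - f0)" by (simp add: H1.vs.scale_right_diff_distrib)
  ultimately show ?thesis using f0 by (intro exI[of _ f0] exI[of _ "f - f0"]) auto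
qed

lemma ker_inj: "rho z \<Longrightarrow> (g, scH z g) \<in> T \<Longrightarrow> \<Gamma>0 g = 0 \<Longrightarrow> g = 0"
  using R_uniq[of z g 0 0] T00 G0_0 by (simp add: A0_iff)

lemma ranG0:
  assumes z: "rho z" and a: "a \<in> \<Gamma>0 ` op_dom T"
  shows "\<exists>g. (g, scH z g) \<in> T \<and> a = \<Gamma>0 g"
proof -
  obtain f u where f: "(f, u) \<in> T" "a = \<Gamma>0 f" using a by (auto simp: op_dom_iff)
  obtain f0 g where d: "(f0, (u - scH z f) + scH z f0) \<in> A0" "(g, scH z g) \<in> T" "f = f0 + g"
    using decomp[OF z f(1)] by blast
  have f0T: "f0 \<in> op_dom T" using d(1) by (auto simp: A0_iff op_dom_iff)
  have "\<Gamma>0 f = \<Gamma>0 f0 + \<Gamma>0 g" using d(3) G0_add[OF f0T inT[OF d(2)]] by simp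
  then have "\<Gamma>0 f = \<Gamma>0 g" using d by (simp add: A0_iff)
  then show ?thesis using d f by blast
qed

lemma gam_graph: "rho z \<Longrightarrow> is_graph (gam z)"
  unfolding is_graph_def gam_iff
proof (intro allI impI, elim conjE)
  fix a f g assume z: "rho z" and h: "(f, scH z f) \<in> T" "a = \<Gamma>0 f" "(g, scH z g) \<in> T" "a = \<Gamma>0 g"
  have "(f - g, scH z (f - g)) \<in> T" by (rule ker_diff[OF h(1,3)])
  moreover have "\<Gamma>0 (f - g) = 0" using h G0_diff inT by simp
  ultimately have "f - g = 0" using ker_inj[OF z] by blast
  then show "f = g" by simp
qed

lemma Wf_graph: "rho z \<Longrightarrow> is_graph (Wf z)"
  unfolding is_graph_def Wf_iff
proof (intro allI impI, elim conjE exE)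
  fix a b c f g assume z: "rho z" and h: "(f, scH z f) \<in> T" "a = \<Gamma>0 f" "b = \<Gamma>1 f"
    "(g, scH z g) \<in> T" "a = \<Gamma>0 g" "c = \<Gamma>1 g"
  have "(f - g, scH z (f - g)) \<in> T" by (rule ker_diff[OF h(1,4)])
  moreover have "\<Gamma>0 (f - g) = 0" using h G0_diff inT by simp
  ultimately have "f - g = 0" using ker_inj[OF z] by blast
  then show "b = c" using h by simp
qed

lemma adj_surj:
  assumes z: "rho z" shows "\<exists>g. (g, u + scH (cnj z) g) \<in> At0"
proof -
  define R where "R h = (THE f. (f, h + scH z f) \<in> A0)" for h
  have Rin: "(R h, h + scH z (R h)) \<in> A0" for h
  proof -
    have "\<exists>!f. (f, h + scH z f) \<in> A0" using R_ex[OF z, of h] R_uniq[OF z, of _ h] by blast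
    then show ?thesis unfolding R_def by (rule theI')
  qed
  have Req: "(f, h + scH z f) \<in> A0 \<Longrightarrow> R h = f" for f h using R_uniq[OF z Rin] by blast
  have Radd: "R (x + y) = R x + R y" for x y
  proof (rule Req)
    have "(R x + R y, (x + scH z (R x)) + (y + scH z (R y))) \<in> A0"
      by (rule lin_rel_add[OF A0_rel Rin Rin])
    then show "(R x + R y, (x + y) + scH z (R x + R y)) \<in> A0"
      by (simp add: H1.vs.scale_right_distrib algebra_simps)
  qed
  have Rscale: "R (scH c x) = scH c (R x)" for c x
  proof (rule Req)
    have "(scH c (R x), scH c (x + scH z (R x))) \<in> A0"
      by (rule lin_rel_scale[OF A0_rel Rin])
    then show "(scH c (R x), scH c x + scH z (scH c (R x))) \<in> A0"
      by (simp add: H1.vs.scale_right_distrib mult.commute)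
  qed
  obtain K where K: "\<And>f h. (f, h + scH z f) \<in> A0 \<Longrightarrow> H1.nm f \<le> K * H1.nm h" using R_bd[OF z] by blast
  define \<phi> where "\<phi> x = ipH (R x) u" for x
  have "\<exists>v. \<forall>x. \<phi> x = ipH x v"
  proof (rule H1.riesz)
    show "\<phi> (x + y) = \<phi> x + \<phi> y" for x y by (simp add: \<phi>_def Radd H1.ip_add_left)
    show "\<phi> (scH c x) = c * \<phi> x" for c x by (simp add: \<phi>_def Rscale H1.ip_scale_left)
    show "cmod (\<phi> x) \<le> (K * H1.nm u) * H1.nm x" for x
    proof -
      have "cmod (\<phi> x) \<le> H1.nm (R x) * H1.nm u" unfolding \<phi>_def by (rule H1.cauchy_schwarz)
      also have "\<dots> \<le> (K * H1.nm x) * H1.nm u" by (rule mult_right_mono[OF K[OF Rin]]) simp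
      finally show ?thesis by (simp add: algebra_simps)
    qed
  qed
  then obtain v where v: "\<And>x. \<phi> x = ipH x v" by blast
  have "(v, u + scH (cnj z) v) \<in> op_adj ipH ipH A0"
    unfolding op_adj_def
  proof (clarify)
    fix f w assume fw: "(f, w) \<in> A0"
    have "(f, (w - scH z f) + scH z f) \<in> A0" using fw by simp
    then have "R (w - scH z f) = f" by (rule Req)
    then have "ipH f u = ipH (w - scH z f) v" using v[of "w - scH z f"] by (simp add: \<phi>_def)
    then show "ipH w v = ipH f (u + scH (cnj z) v)"
      by (simp add: H1.ip_diff_left H1.ip_scale_left H1.ip_add_right H1.ip_scale_right)
  qed
  then show ?thesis using M1 by blast
qed

lemma dense_mono: "hdense ip S \<Longrightarrow> S \<subseteq> S' \<Longrightarrow> hdense ip S'"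
  unfolding hdense_def hclosure_def by blast

lemma gamt_dense:
  assumes z: "rho z" shows "hdense ipG (\<Gamma>t0 ` {g. (g, scH (cnj z) g) \<in> Tt})"
proof (rule dense_mono[OF Dt])
  show "\<Gamma>t0 ` op_dom Tt \<subseteq> \<Gamma>t0 ` {g. (g, scH (cnj z) g) \<in> Tt}"
  proof
    fix a assume "a \<in> \<Gamma>t0 ` op_dom Tt"
    then obtain g w where g: "(g, w) \<in> Tt" "a = \<Gamma>t0 g" by (auto simp: op_dom_iff)
    obtain g0 where g0: "(g0, (w - scH (cnj z) g) + scH (cnj z) g0) \<in> At0" using adj_surj[OF z] by blast
    have "(g0, (w - scH (cnj z) g) + scH (cnj z) g0) \<in> Tt" using g0 by (simp add: At0_iff)
    then have "(g - g0, w - ((w - scH (cnj z) g) + scH (cnj z) g0)) \<in> Tt"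
      by (rule lin_rel_diff[OF vsH vsH Tt_rel g(1)])
    moreover have "w - ((w - scH (cnj z) g) + scH (cnj z) g0) = scH (cnj z) (g - g0)"
      by (simp add: H1.vs.scale_right_diff_distrib)
    ultimately have k: "(g - g0, scH (cnj z) (g - g0)) \<in> Tt" by simp
    have "\<Gamma>t0 (g - g0) = \<Gamma>t0 g" using Gt0_diff[OF inTt[OF g(1)], of g0] g0 inTt by (auto simp: At0_iff)
    then show "a \<in> \<Gamma>t0 ` {g. (g, scH (cnj z) g) \<in> Tt}" using k g by (metis (mono_tags, lifting) image_eqI mem_Collect_eq)
  qed
qed

lemma adj_graph:
  assumes z: "rho z" shows "is_graph (op_adj ipG ipH (gamt (cnj z)))"
  unfolding is_graph_def
proof (intro allI impI, elim conjE)
  fix y a b assume a: "(y, a) \<in> op_adj ipG ipH (gamt (cnj z))" and b: "(y, b) \<in> op_adj ipG ipH (gamt (cnj z))"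
  have "a - b = 0"
  proof (rule H2.ortho_dense[OF gamt_dense[OF z]])
    fix s assume "s \<in> \<Gamma>t0 ` {g. (g, scH (cnj z) g) \<in> Tt}"
    then obtain g where g: "(g, scH (cnj z) g) \<in> Tt" "s = \<Gamma>t0 g" by blast
    then have "(s, g) \<in> gamt (cnj z)" by (simp add: gamt_iff)
    then have "ipH g y = ipG s a" "ipH g y = ipG s b" using a b by (auto simp: op_adj_def)
    then show "ipG s (a - b) = 0" by (simp add: H2.ip_diff_right)
  qed
  then show "a = b" by simp
qed

lemma adj_mem:
  assumes f0: "(f0, h + scH z f0) \<in> A0" shows "(h, \<Gamma>1 f0) \<in> op_adj ipG ipH (gamt (cnj z))"
  unfolding op_adj_def
proof (clarify)
  fix a g assume "(a, g) \<in> gamt (cnj z)"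
  then have g: "(g, scH (cnj z) g) \<in> Tt" "a = \<Gamma>t0 g" by (auto simp: gamt_iff)
  have "ipH (h + scH z f0) g - ipH f0 (scH (cnj z) g) = ipG (\<Gamma>1 f0) (\<Gamma>t0 g) - ipG (\<Gamma>0 f0) (\<Gamma>t1 g)"
    using green f0 g by (auto simp: A0_iff)
  then have "ipH h g = ipG (\<Gamma>1 f0) (\<Gamma>t0 g)" using f0
    by (simp add: A0_iff H1.ip_add_left H1.ip_scale_left H1.ip_scale_right)
  then have "cnj (ipH h g) = cnj (ipG (\<Gamma>1 f0) (\<Gamma>t0 g))" by simp
  then show "ipH g h = ipG a (\<Gamma>1 f0)" using g H1.ip_sym[of h g] H2.ip_sym[of "\<Gamma>1 f0" "\<Gamma>t0 g"] by simp
qed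

lemma gam_ident:
  assumes g: "(g, scH z g) \<in> T" and gt: "(gt, k + scH (cnj z) gt) \<in> At0"
  shows "ipH g k = ipG (\<Gamma>0 g) (\<Gamma>t1 gt)"
proof -
  have "ipH (scH z g) gt - ipH g (k + scH (cnj z) gt) = ipG (\<Gamma>1 g) (\<Gamma>t0 gt) - ipG (\<Gamma>0 g) (\<Gamma>t1 gt)"
    using green g gt by (auto simp: At0_iff)
  then show ?thesis using gt
    by (simp add: At0_iff H1.ip_add_right H1.ip_scale_left H1.ip_scale_right)
qed


lemma res_graph: "z \<in> resolvent_set sc ip A \<Longrightarrow> is_graph (op_inv (op_shift sc A z))"
  by (simp add: resolvent_set_def)

lemma v_ex: "(f0, u0) \<in> A0 \<Longrightarrow> \<exists>\<psi> a. (\<Gamma>1 f0, \<psi>) \<in> B2 \<and> (\<psi>, a) \<in> B1"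
  using hv by (force simp: op_dom_iff op_comp_iff)

lemma fixpt_zero:
  assumes zB: "z \<in> resolvent_set scH ipH AB" and d: "(d, d) \<in> op_comp B2 (op_comp (Wf z) B1)"
  shows "d = 0"
proof -
  obtain a b where ab: "(d, a) \<in> B1" "(a, b) \<in> Wf z" "(b, d) \<in> B2" using d by (auto simp: op_comp_iff)
  then obtain g where g: "(g, scH z g) \<in> T" "a = \<Gamma>0 g" "b = \<Gamma>1 g" by (auto simp: Wf_iff)
  have "(g, scH z g) \<in> AB" using g ab by (auto simp: AB_iff op_comp_iff)
  moreover have "(0, 0) \<in> AB" by (rule lin_rel_zero[OF AB_rel])
  ultimately have "g = 0" using res_inj[OF zB, of g "scH z g" 0 0] by simp
  then have "b = 0" "a = 0" using g G0_0 G1_0 by auto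
  then show ?thesis using ab(3) lin_rel_zero[OF B2_rel] B2_gr unfolding is_graph_def by blast
qed

lemma Iminus_graph:
  assumes zB: "z \<in> resolvent_set scH ipH AB"
  shows "is_graph (op_inv (op_I_minus (op_comp B2 (op_comp (Wf z) B1))))"
  unfolding is_graph_def op_inv_iff op_I_minus_iff
proof (intro allI impI, elim conjE exE)
  let ?K = "op_comp B2 (op_comp (Wf z) B1)"
  have K: "lin_rel scG scG ?K" by (rule lin_rel_comp[OF B2_rel lin_rel_comp[OF Wf_rel B1_rel]])
  fix a x x' y y' assume h: "(x, y) \<in> ?K" "a = x - y" "(x', y') \<in> ?K" "a = x' - y'"
  have "(x - x', y - y') \<in> ?K" by (rule lin_rel_diff[OF vsG vsG K h(1,3)])
  moreover have "y - y' = x - x'" using h(2,4) by (simp add: algebra_simps)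
  ultimately have "(x - x', x - x') \<in> ?K" by simp
  then have "x - x' = 0" by (rule fixpt_zero[OF zB])
  then show "x = x'" by simp
qed

theorem formula:
  assumes z: "rho z" and zB: "z \<in> resolvent_set scH ipH AB"
  shows "op_inv (op_shift scH AB z) =
       op_plus (op_inv (op_shift scH A0 z))
         (op_comp (gam z)
           (op_comp B1
             (op_comp (op_inv (op_I_minus (op_comp B2 (op_comp (Wf z) B1))))
               (op_comp B2 (op_adj ipG ipH (gamt (cnj z)))))))"
  (is "?L = ?R")
proof (rule graph_eq)
  show "\<exists>f. (h, f) \<in> ?L" for h using res_surj[OF zB, of h] by (auto simp: op_inv_iff op_shift_iff)
  show "is_graph ?R"
    by (intro is_graph_plus is_graph_comp res_graph[OF z] gam_graph[OF z] B1_gr B2_gr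
        Iminus_graph[OF zB] adj_graph[OF z])
  show "?L \<subseteq> ?R"
  proof clarify
    fix h f assume "(h, f) \<in> ?L"
    then obtain u where fu: "(f, u) \<in> AB" "h = u - scH z f" by (auto simp: op_inv_iff op_shift_iff)
    then have fT: "(f, u) \<in> T" and "(\<Gamma>1 f, \<Gamma>0 f) \<in> op_comp B1 B2" by (auto simp: AB_iff)
    then obtain \<phi> where \<phi>: "(\<Gamma>1 f, \<phi>) \<in> B2" "(\<phi>, \<Gamma>0 f) \<in> B1" by (auto simp: op_comp_iff)
    obtain f0 where f0: "(f0, h + scH z f0) \<in> A0" using R_ex[OF z] by blast
    have f0T: "(f0, h + scH z f0) \<in> T" "\<Gamma>0 f0 = 0" using f0 by (auto simp: A0_iff)
    define g where "g = f - f0"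
    have "(f - f0, u - (h + scH z f0)) \<in> T" by (rule lin_rel_diff[OF vsH vsH T_rel fT f0T(1)])
    moreover have "u - (h + scH z f0) = scH z (f - f0)" using fu(2) by (simp add: H1.vs.scale_right_diff_distrib)
    ultimately have g: "(g, scH z g) \<in> T" by (simp add: g_def)
    have G0g: "\<Gamma>0 g = \<Gamma>0 f" using G0_diff[OF inT[OF fT] inT[OF f0T(1)]] f0T(2) by (simp add: g_def)
    have G1g: "\<Gamma>1 g = \<Gamma>1 f - \<Gamma>1 f0" using G1_diff[OF inT[OF fT] inT[OF f0T(1)]] by (simp add: g_def)
    obtain \<psi> where \<psi>: "(\<Gamma>1 f0, \<psi>) \<in> B2" using v_ex[OF f0] by blast
    have c1: "(h, \<Gamma>1 f0) \<in> op_adj ipG ipH (gamt (cnj z))" by (rule adj_mem[OF f0])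
    have c2: "(\<Gamma>1 g, \<phi> - \<psi>) \<in> B2" unfolding G1g by (rule lin_rel_diff[OF vsG vsG B2_rel \<phi>(1) \<psi>])
    have c3: "(\<Gamma>0 f, \<Gamma>1 g) \<in> Wf z" using g G0g by (auto simp: Wf_iff)
    have c4: "(\<phi>, \<Gamma>1 g) \<in> op_comp (Wf z) B1" using \<phi>(2) c3 by (auto simp: op_comp_iff)
    have c5: "(\<phi>, \<phi> - \<psi>) \<in> op_comp B2 (op_comp (Wf z) B1)"
      using c2 c4 by (auto simp: op_comp_iff)
    have c6: "(\<psi>, \<phi>) \<in> op_inv (op_I_minus (op_comp B2 (op_comp (Wf z) B1)))"
      using c5 by (auto simp: op_inv_iff op_I_minus_iff)
    have c7: "(\<Gamma>0 f, g) \<in> gam z" using g G0g by (simp add: gam_iff)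
    have "(h, g) \<in> op_comp (gam z) (op_comp B1 (op_comp (op_inv (op_I_minus (op_comp B2 (op_comp (Wf z) B1))))
               (op_comp B2 (op_adj ipG ipH (gamt (cnj z))))))"
      unfolding op_comp_iff using c1 \<psi> c6 \<phi>(2) c7 by blast
    moreover have "(h, f0) \<in> op_inv (op_shift scH A0 z)" using f0 by (auto simp: op_inv_iff op_shift_iff)
    moreover have "f = f0 + g" by (simp add: g_def)
    ultimately show "(h, f) \<in> ?R" by (auto simp: op_plus_iff)
  qed
qed


lemma closed_from_res:
  assumes z: "z \<in> resolvent_set scH ipH AB" shows "closed_op ipH ipH AB"
  unfolding closed_op_def
proof clarify
  fix f u assume "(f, u) \<in> op_closure ipH ipH AB"
  then obtain F U where FU: "\<And>n. (F n, U n) \<in> AB" "hlim ipH F f" "hlim ipH U u"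
    unfolding op_closure_def by blast
  obtain K where K: "\<And>x y. (x, y) \<in> AB \<Longrightarrow> H1.nm x \<le> K * H1.nm (y - scH z x)" using res_bd[OF z] by blast
  obtain f' u' where f': "(f', u') \<in> AB" "u - scH z f = u' - scH z f'" using res_surj[OF z] by blast
  have hl: "hlim ipH (\<lambda>n. U n - scH z (F n)) (u - scH z f)" by (intro H1.hlim_diff H1.hlim_scale FU)
  have "hlim ipH F f'"
  proof (rule H1.hlim_bound[OF hl])
    fix n
    have "(F n - f', U n - u') \<in> AB" by (rule lin_rel_diff[OF vsH vsH AB_rel FU(1) f'(1)])
    then have "H1.nm (F n - f') \<le> K * H1.nm ((U n - u') - scH z (F n - f'))" by (rule K)
    also have "(U n - u') - scH z (F n - f') = (U n - scH z (F n)) - (u - scH z f)"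
      using f'(2) by (simp add: H1.vs.scale_right_diff_distrib algebra_simps)
    finally show "H1.nm (F n - f') \<le> K * H1.nm (U n - scH z (F n) - (u - scH z f))" .
  qed
  then have "f = f'" using FU(2) H1.hlim_unique by blast
  then have "u = u'" using f'(2) by simp
  then show "(f, u) \<in> AB" using f' \<open>f = f'\<close> by simp
qed

lemma gam_closable: assumes z: "rho z" shows "closable ipG ipH (gam z)"
  unfolding closable_def is_graph_def
proof (intro allI impI, elim conjE)
  fix a y1 y2 assume "(a, y1) \<in> op_closure ipG ipH (gam z)" "(a, y2) \<in> op_closure ipG ipH (gam z)"
  then obtain A1 G1 A2 G2 where s: "\<And>n. (A1 n, G1 n) \<in> gam z" "hlim ipG A1 a" "hlim ipH G1 y1"
    "\<And>n. (A2 n, G2 n) \<in> gam z" "hlim ipG A2 a" "hlim ipH G2 y2" unfolding op_closure_def by blast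
  have eq: "ipH y1 k = ipH y2 k" for k
  proof -
    obtain gt where gt: "(gt, k + scH (cnj z) gt) \<in> At0" using adj_surj[OF z] by blast
    have "ipH (G1 n) k = ipG (A1 n) (\<Gamma>t1 gt)" "ipH (G2 n) k = ipG (A2 n) (\<Gamma>t1 gt)" for n
      using gam_ident[OF _ gt] s(1,4) by (auto simp: gam_iff)
    moreover have "(\<lambda>n. ipH (G1 n) k) \<longlonglongrightarrow> ipH y1 k" "(\<lambda>n. ipH (G2 n) k) \<longlonglongrightarrow> ipH y2 k"
      using s by (auto intro: H1.hlim_ip_left)
    moreover have "(\<lambda>n. ipG (A1 n) (\<Gamma>t1 gt)) \<longlonglongrightarrow> ipG a (\<Gamma>t1 gt)" "(\<lambda>n. ipG (A2 n) (\<Gamma>t1 gt)) \<longlonglongrightarrow> ipG a (\<Gamma>t1 gt)"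
      using s by (auto intro: H2.hlim_ip_left)
    ultimately have "(\<lambda>n. ipG (A1 n) (\<Gamma>t1 gt)) \<longlonglongrightarrow> ipH y1 k" "(\<lambda>n. ipG (A2 n) (\<Gamma>t1 gt)) \<longlonglongrightarrow> ipH y2 k"
      "(\<lambda>n. ipG (A1 n) (\<Gamma>t1 gt)) \<longlonglongrightarrow> ipG a (\<Gamma>t1 gt)" "(\<lambda>n. ipG (A2 n) (\<Gamma>t1 gt)) \<longlonglongrightarrow> ipG a (\<Gamma>t1 gt)"
      by simp_all
    then show ?thesis using LIMSEQ_unique by metis
  qed
  have "ipH (y1 - y2) (y1 - y2) = 0" using eq[of "y1 - y2"] by (simp add: H1.ip_diff_left)
  then have "y1 - y2 = 0" by (rule H1.ip_eq0)
  then show "y1 = y2" by simp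
qed

end

locale setting2 = setting +
  fixes z0 :: complex
  assumes z0: "z0 \<in> resolvent_set scH ipH (ker_restr T \<Gamma>0)"
    and MB1_cl: "closable ipG ipG (op_comp (weyl scH T \<Gamma>0 \<Gamma>1 z0) B1)"
    and hi: "1 \<in> resolvent_set scG ipG (op_comp B2 (op_closure ipG ipG (op_comp (weyl scH T \<Gamma>0 \<Gamma>1 z0) B1)))"
    and hii: "op_ran (op_comp B2 (op_closure ipG ipG (op_comp (weyl scH T \<Gamma>0 \<Gamma>1 z0) B1)))
                 \<subseteq> \<Gamma>0 ` op_dom T \<inter> op_dom B1"
    and hiii: "op_ran (op_restrict B1 (\<Gamma>0 ` op_dom T)) \<subseteq> \<Gamma>0 ` op_dom T"
    and hiv: "op_ran (op_restrict B2 (\<Gamma>1 ` op_dom T)) \<subseteq> \<Gamma>0 ` op_dom T"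
begin

abbreviation "C \<equiv> op_comp B2 (op_closure ipG ipG (op_comp (Wf z0) B1))"

lemma C_rel: "lin_rel scG scG C"
  by (rule lin_rel_comp[OF B2_rel GG.closure_lin_rel[OF lin_rel_comp[OF Wf_rel B1_rel]]])


lemma C00: "(0, 0) \<in> C" by (rule lin_rel_zero[OF C_rel])

lemma construct:
  "\<exists>f0 \<psi> \<phi> a g. (f0, h + scH z0 f0) \<in> A0 \<and> (\<Gamma>1 f0, \<psi>) \<in> B2 \<and> (\<phi>, \<phi> - \<psi>) \<in> C \<and>
     (\<phi>, a) \<in> B1 \<and> (g, scH z0 g) \<in> T \<and> a = \<Gamma>0 g \<and> (\<Gamma>1 g, \<phi> - \<psi>) \<in> B2 \<and>
     (f0 + g, h + scH z0 (f0 + g)) \<in> AB"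
proof -
  obtain f0 where f0: "(f0, h + scH z0 f0) \<in> A0" using R_ex[OF z0] by blast
  have f0T: "(f0, h + scH z0 f0) \<in> T" "\<Gamma>0 f0 = 0" using f0 by (auto simp: A0_iff)
  obtain \<psi> a1 where \<psi>: "(\<Gamma>1 f0, \<psi>) \<in> B2" "(\<psi>, a1) \<in> B1" using v_ex[OF f0] by blast
  obtain x y where xy: "(x, y) \<in> C" "- \<psi> = y - scG 1 x" using res_surj[OF hi, of "- \<psi>"] by blast
  define \<phi> where "\<phi> = x"
  have "y = \<phi> - \<psi>" using xy(2) unfolding \<phi>_def by (simp add: algebra_simps)
  then have \<phi>C: "(\<phi>, \<phi> - \<psi>) \<in> C" using xy(1) by (simp add: \<phi>_def)
  then have "\<phi> - \<psi> \<in> op_ran C" unfolding op_ran_iff by blast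
  then have "\<phi> - \<psi> \<in> \<Gamma>0 ` op_dom T \<inter> op_dom B1" using hii by blast
  then obtain a2 where a2: "(\<phi> - \<psi>, a2) \<in> B1" and dpsi: "\<phi> - \<psi> \<in> \<Gamma>0 ` op_dom T" by (auto simp: op_dom_iff)
  have "\<psi> \<in> \<Gamma>0 ` op_dom T" using hiv \<psi>(1) inT[OF f0T(1)]
    by (force simp: op_ran_iff op_restrict_def)
  then have "a1 \<in> \<Gamma>0 ` op_dom T" using hiii \<psi>(2) by (force simp: op_ran_iff op_restrict_def)
  moreover have "a2 \<in> \<Gamma>0 ` op_dom T" using hiii a2 dpsi by (force simp: op_ran_iff op_restrict_def)
  ultimately have "a1 + a2 \<in> \<Gamma>0 ` op_dom T" using G0_add domT_add by (metis (no_types, lifting) image_iff)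
  then obtain g where g: "(g, scH z0 g) \<in> T" "a1 + a2 = \<Gamma>0 g" using ranG0[OF z0] by blast
  have \<phi>a: "(\<phi>, a1 + a2) \<in> B1" using lin_rel_add[OF B1_rel \<psi>(2) a2] by simp
  have "(a1 + a2, \<Gamma>1 g) \<in> Wf z0" using g by (auto simp: Wf_iff)
  then have "(\<phi>, \<Gamma>1 g) \<in> op_comp (Wf z0) B1" using \<phi>a by (auto simp: op_comp_iff)
  then have cl1: "(\<phi>, \<Gamma>1 g) \<in> op_closure ipG ipG (op_comp (Wf z0) B1)" using GG.subset_closure by blast
  obtain w where w: "(\<phi>, w) \<in> op_closure ipG ipG (op_comp (Wf z0) B1)" "(w, \<phi> - \<psi>) \<in> B2"
    using \<phi>C by (auto simp: op_comp_iff)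
  have "w = \<Gamma>1 g" using MB1_cl cl1 w(1) unfolding closable_def is_graph_def by blast
  then have g2: "(\<Gamma>1 g, \<phi> - \<psi>) \<in> B2" using w(2) by simp
  have "(f0 + g, (h + scH z0 f0) + scH z0 g) \<in> T" by (rule lin_rel_add[OF T_rel f0T(1) g(1)])
  then have T1: "(f0 + g, h + scH z0 (f0 + g)) \<in> T" by (simp add: H1.vs.scale_right_distrib add.assoc)
  have "\<Gamma>0 (f0 + g) = a1 + a2" using G0_add[OF inT[OF f0T(1)] inT[OF g(1)]] f0T(2) g(2) by simp
  moreover have "\<Gamma>1 (f0 + g) = \<Gamma>1 f0 + \<Gamma>1 g" using G1_add[OF inT[OF f0T(1)] inT[OF g(1)]] .
  moreover have "(\<Gamma>1 f0 + \<Gamma>1 g, \<psi> + (\<phi> - \<psi>)) \<in> B2" by (rule lin_rel_add[OF B2_rel \<psi>(1) g2])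
  ultimately have "(\<Gamma>1 (f0 + g), \<Gamma>0 (f0 + g)) \<in> op_comp B1 B2" using \<phi>a by (auto simp: op_comp_iff)
  then have "(f0 + g, h + scH z0 (f0 + g)) \<in> AB" using T1 by (simp add: AB_iff)
  then show ?thesis using f0 \<psi>(1) \<phi>C \<phi>a g g2 by blast
qed

lemma AB_inj:
  assumes "(f, u) \<in> AB" "(f', u') \<in> AB" "u - scH z0 f = u' - scH z0 f'" shows "f = f'"
proof -
  define e where "e = f - f'"
  have "(f - f', u - u') \<in> AB" by (rule lin_rel_diff[OF vsH vsH AB_rel assms(1,2)])
  moreover have "u - u' = scH z0 e" using assms(3) by (simp add: e_def H1.vs.scale_right_diff_distrib algebra_simps)
  ultimately have e: "(e, scH z0 e) \<in> AB" by (simp add: e_def)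
  then have eT: "(e, scH z0 e) \<in> T" and "(\<Gamma>1 e, \<Gamma>0 e) \<in> op_comp B1 B2" by (auto simp: AB_iff)
  then obtain \<phi> where \<phi>: "(\<Gamma>1 e, \<phi>) \<in> B2" "(\<phi>, \<Gamma>0 e) \<in> B1" by (auto simp: op_comp_iff)
  have "(\<Gamma>0 e, \<Gamma>1 e) \<in> Wf z0" using eT by (auto simp: Wf_iff)
  then have "(\<phi>, \<Gamma>1 e) \<in> op_comp (Wf z0) B1" using \<phi>(2) by (auto simp: op_comp_iff)
  then have "(\<phi>, \<Gamma>1 e) \<in> op_closure ipG ipG (op_comp (Wf z0) B1)" using GG.subset_closure by blast
  then have "(\<phi>, \<phi>) \<in> C" using \<phi>(1) by (auto simp: op_comp_iff)
  then have "\<phi> = 0" using res_inj[OF hi _ C00, of \<phi> \<phi>] by simp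
  then have "\<Gamma>0 e = 0" using \<phi>(2) lin_rel_zero[OF B1_rel] B1_gr unfolding is_graph_def by blast
  then have "e = 0" using ker_inj[OF z0 eT] by simp
  then show ?thesis by (simp add: e_def)
qed


abbreviation "R0 \<equiv> op_inv (op_shift scH A0 z0)"
definition "G1gr = {(f, \<Gamma>1 f) | f. f \<in> op_dom T}"
abbreviation "GX \<equiv> op_comp G1gr R0"
abbreviation "GY \<equiv> op_comp B2 GX"
abbreviation "Wg \<equiv> op_inv (op_shift scG C 1)"
definition "Ng = {(x, - x) | x :: 'g::ab_group_add. True}"
abbreviation "Gphi \<equiv> op_comp Wg (op_comp Ng GY)"
abbreviation "GZ \<equiv> op_comp B1 Gphi"
abbreviation "GQ \<equiv> op_comp (gam z0) GZ"

lemma R0_iff: "(h, f) \<in> R0 \<longleftrightarrow> (f, h + scH z0 f) \<in> A0"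
  by (auto simp: op_inv_iff op_shift_iff)

lemma G1gr_iff: "(f, x) \<in> G1gr \<longleftrightarrow> f \<in> op_dom T \<and> x = \<Gamma>1 f"
  by (auto simp: G1gr_def)

lemma Ng_iff: "(x, y) \<in> Ng \<longleftrightarrow> y = - x" by (auto simp: Ng_def)

lemma G1gr_rel: "lin_rel scH scG G1gr"
  unfolding lin_rel_def G1gr_iff
  using domT_add domT_scale G1_add G1_scale G1_0 inT[OF T00] by auto

lemma Ng_rel: "lin_rel scG scG Ng"
  unfolding lin_rel_def Ng_iff by (auto simp: algebra_simps)

lemma R0_rel: "lin_rel scH scH R0" by (rule lin_rel_inv[OF lin_rel_shift[OF vsH A0_rel]])
lemma Wg_rel: "lin_rel scG scG Wg" by (rule lin_rel_inv[OF lin_rel_shift[OF vsG C_rel]])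

lemma GX_rel: "lin_rel scH scG GX" by (rule lin_rel_comp[OF G1gr_rel R0_rel])
lemma GY_rel: "lin_rel scH scG GY" by (rule lin_rel_comp[OF B2_rel GX_rel])
lemma Gphi_rel: "lin_rel scH scG Gphi" by (rule lin_rel_comp[OF Wg_rel lin_rel_comp[OF Ng_rel GY_rel]])
lemma GZ_rel: "lin_rel scH scG GZ" by (rule lin_rel_comp[OF B1_rel Gphi_rel])
lemma GQ_rel: "lin_rel scH scH GQ" by (rule lin_rel_comp[OF gam_rel GZ_rel])

lemma G1gr_gr: "is_graph G1gr" unfolding is_graph_def G1gr_iff by blast
lemma Ng_gr: "is_graph Ng" unfolding is_graph_def Ng_iff by blast
lemma GX_gr: "is_graph GX" by (intro is_graph_comp G1gr_gr res_graph[OF z0])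
lemma GY_gr: "is_graph GY" by (intro is_graph_comp B2_gr GX_gr)
lemma Gphi_gr: "is_graph Gphi" by (intro is_graph_comp res_graph[OF hi] Ng_gr GY_gr)
lemma GZ_gr: "is_graph GZ" by (intro is_graph_comp B1_gr Gphi_gr)
lemma GQ_gr: "is_graph GQ" by (intro is_graph_comp gam_graph[OF z0] GZ_gr)

lemma chain:
  "\<exists>f0 \<psi> \<phi> a g. (h, f0) \<in> R0 \<and> (h, \<Gamma>1 f0) \<in> GX \<and> (h, \<psi>) \<in> GY \<and> (h, \<phi>) \<in> Gphi \<and>
     (h, a) \<in> GZ \<and> (h, g) \<in> GQ \<and> (f0 + g, h + scH z0 (f0 + g)) \<in> AB"
proof -
  obtain f0 \<psi> \<phi> a g where c: "(f0, h + scH z0 f0) \<in> A0" "(\<Gamma>1 f0, \<psi>) \<in> B2" "(\<phi>, \<phi> - \<psi>) \<in> C"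
     "(\<phi>, a) \<in> B1" "(g, scH z0 g) \<in> T" "a = \<Gamma>0 g" "(f0 + g, h + scH z0 (f0 + g)) \<in> AB"
    using construct[of h] by blast
  have 1: "(h, f0) \<in> R0" using c(1) by (simp add: R0_iff)
  have "f0 \<in> op_dom T" using c(1) by (auto simp: A0_iff op_dom_iff)
  then have 2: "(h, \<Gamma>1 f0) \<in> GX" using 1 by (auto simp: op_comp_iff G1gr_iff)
  have 3: "(h, \<psi>) \<in> GY" by (rule op_compI[OF 2 c(2)])
  have W: "(- \<psi>, \<phi>) \<in> Wg" using c(3) by (auto simp: op_inv_iff op_shift_iff intro!: exI[of _ "\<phi> - \<psi>"])
  have "(\<psi>, - \<psi>) \<in> Ng" by (simp add: Ng_iff)
  then have 4: "(h, \<phi>) \<in> Gphi" by (rule op_compI[OF op_compI[OF 3] W])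
  have 5: "(h, a) \<in> GZ" by (rule op_compI[OF 4 c(4)])
  have "(a, g) \<in> gam z0" using c(5,6) by (simp add: gam_iff)
  then have 6: "(h, g) \<in> GQ" by (rule op_compI[OF 5])
  show ?thesis using 1 2 3 4 5 6 c(7) by blast
qed

lemma GX_dom: "op_dom GX = UNIV" unfolding op_dom_UNIV using chain by blast
lemma GY_dom: "op_dom GY = UNIV" unfolding op_dom_UNIV using chain by blast
lemma Gphi_dom: "op_dom Gphi = UNIV" unfolding op_dom_UNIV using chain by blast
lemma GZ_dom: "op_dom GZ = UNIV" unfolding op_dom_UNIV using chain by blast
lemma GQ_dom: "op_dom GQ = UNIV" unfolding op_dom_UNIV using chain by blast

lemma GX_closed: "closed_op ipH ipG GX"
  unfolding closed_op_def
proof clarify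
  fix h x assume "(h, x) \<in> op_closure ipH ipG GX"
  then obtain Hs Xs where s: "\<And>n. (Hs n, Xs n) \<in> GX" "hlim ipH Hs h" "hlim ipG Xs x"
    unfolding op_closure_def by blast
  have adjn: "(Hs n, Xs n) \<in> op_adj ipG ipH (gamt (cnj z0))" for n
  proof -
    obtain f where "(Hs n, f) \<in> R0" "(f, Xs n) \<in> G1gr" using s(1)[of n] by (auto simp: op_comp_iff)
    then show ?thesis using adj_mem[of f "Hs n" z0] by (auto simp: R0_iff G1gr_iff)
  qed
  have "(h, x) \<in> op_adj ipG ipH (gamt (cnj z0))"
    unfolding op_adj_def
  proof clarify
    fix a g assume ag: "(a, g) \<in> gamt (cnj z0)"
    have "ipH g (Hs n) = ipG a (Xs n)" for n using adjn[of n] ag by (auto simp: op_adj_def)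
    moreover have "(\<lambda>n. ipH g (Hs n)) \<longlonglongrightarrow> ipH g h" by (rule H1.hlim_ip_right[OF s(2)])
    moreover have "(\<lambda>n. ipG a (Xs n)) \<longlonglongrightarrow> ipG a x" by (rule H2.hlim_ip_right[OF s(3)])
    ultimately show "ipH g h = ipG a x" using LIMSEQ_unique by simp
  qed
  moreover obtain x' where x': "(h, x') \<in> GX" using GX_dom unfolding op_dom_UNIV by blast
  moreover have "(h, x') \<in> op_adj ipG ipH (gamt (cnj z0))"
  proof -
    obtain f where "(h, f) \<in> R0" "(f, x') \<in> G1gr" using x' by (auto simp: op_comp_iff)
    then show ?thesis using adj_mem[of f h z0] by (auto simp: R0_iff G1gr_iff)
  qed
  ultimately have "x = x'" using adj_graph[OF z0] unfolding is_graph_def by blast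
  then show "(h, x) \<in> GX" using x' by simp
qed

lemma GX_bd: "\<exists>K. \<forall>x y. (x, y) \<in> GX \<longrightarrow> H2.nm y \<le> K * H1.nm x"
  by (rule cgt) (simp_all add: lin_op_iff GX_rel GX_gr GX_dom GX_closed)

lemma GY_bd: "\<exists>K. \<forall>x y. (x, y) \<in> GY \<longrightarrow> H2.nm y \<le> K * H1.nm x"
proof -
  obtain K where K: "\<And>x y. (x, y) \<in> GX \<Longrightarrow> H2.nm y \<le> K * H1.nm x" using GX_bd by blast
  have "closed_op ipH ipG GY" by (rule HGG.comp_closed[OF GX_rel GX_gr GX_dom K B2_cl GY_dom])
  then show ?thesis by (intro cgt) (simp_all add: lin_op_iff GY_rel GY_gr GY_dom)
qed

lemma Gphi_bd: "\<exists>K. \<forall>x y. (x, y) \<in> Gphi \<longrightarrow> H2.nm y \<le> K * H1.nm x"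
proof -
  obtain KY where KY: "\<And>x y. (x, y) \<in> GY \<Longrightarrow> H2.nm y \<le> KY * H1.nm x" using GY_bd by blast
  obtain KW where KW: "\<And>x y. (x, y) \<in> C \<Longrightarrow> H2.nm x \<le> KW * H2.nm (y - scG 1 x)" using res_bd[OF hi] by blast
  have "H2.nm y \<le> (max KW 0 * KY) * H1.nm x" if xy: "(x, y) \<in> Gphi" for x y
  proof -
    obtain q where q: "(x, q) \<in> op_comp Ng GY" "(q, y) \<in> Wg" by (rule op_compE[OF xy])
    obtain p where p: "(x, p) \<in> GY" "(p, q) \<in> Ng" by (rule op_compE[OF q(1)])
    have pq: "(x, p) \<in> GY" "(p, q) \<in> Ng" "(q, y) \<in> Wg" using p q by auto
    then obtain y' where y': "(y, y') \<in> C" "q = y' - scG 1 y" by (auto simp: op_inv_iff op_shift_iff)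
    have "H2.nm y \<le> KW * H2.nm q" using KW[OF y'(1)] y'(2) by simp
    also have "\<dots> \<le> max KW 0 * H2.nm q" by (simp add: mult_right_mono)
    also have "H2.nm q = H2.nm p" using pq(2) by (simp add: Ng_iff H2.nm_minus)
    also have "max KW 0 * H2.nm p \<le> max KW 0 * (KY * H1.nm x)" by (rule mult_left_mono[OF KY[OF pq(1)]]) simp
    finally show ?thesis by (simp add: mult.assoc)
  qed
  then show ?thesis by blast
qed

lemma GZ_bd: "\<exists>K. \<forall>x y. (x, y) \<in> GZ \<longrightarrow> H2.nm y \<le> K * H1.nm x"
proof -
  obtain K where K: "\<And>x y. (x, y) \<in> Gphi \<Longrightarrow> H2.nm y \<le> K * H1.nm x" using Gphi_bd by blast
  have "closed_op ipH ipG GZ" by (rule HGG.comp_closed[OF Gphi_rel Gphi_gr Gphi_dom K B1_cl GZ_dom])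
  then show ?thesis by (intro cgt) (simp_all add: lin_op_iff GZ_rel GZ_gr GZ_dom)
qed

lemma GQ_bd: "\<exists>K. \<forall>x y. (x, y) \<in> GQ \<longrightarrow> H1.nm y \<le> K * H1.nm x"
proof -
  obtain K where K: "\<And>x y. (x, y) \<in> GZ \<Longrightarrow> H2.nm y \<le> K * H1.nm x" using GZ_bd by blast
  have "closed_op ipH ipH GQ" by (rule HGH.comp_closed[OF GZ_rel GZ_gr GZ_dom K gam_closable[OF z0] GQ_dom])
  then show ?thesis by (intro HH.cgt) (simp_all add: lin_op_iff GQ_rel GQ_gr GQ_dom)
qed

theorem z0_res: "z0 \<in> resolvent_set scH ipH AB"
proof -
  obtain KQ where KQ: "\<And>x y. (x, y) \<in> GQ \<Longrightarrow> H1.nm y \<le> KQ * H1.nm x" using GQ_bd by blast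
  obtain K0 where K0: "\<And>f h. (f, h + scH z0 f) \<in> A0 \<Longrightarrow> H1.nm f \<le> K0 * H1.nm h" using R_bd[OF z0] by blast
  show ?thesis
  proof (rule res_intro)
    show "x = x'" if "(x, y) \<in> AB" "(x', y') \<in> AB" "y - scH z0 x = y' - scH z0 x'" for x y x' y'
      by (rule AB_inj[OF that])
    show "\<exists>x y. (x, y) \<in> AB \<and> h = y - scH z0 x" for h using chain[of h] by force
    show "H1.nm x \<le> (K0 + KQ) * H1.nm (y - scH z0 x)" if xy: "(x, y) \<in> AB" for x y
    proof -
      define h where "h = y - scH z0 x"
      obtain f0 g where c: "(h, f0) \<in> R0" "(h, g) \<in> GQ" "(f0 + g, h + scH z0 (f0 + g)) \<in> AB"
        using chain[of h] by blast
      have "x = f0 + g" by (rule AB_inj[OF xy c(3)]) (simp add: h_def)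
      then have "H1.nm x \<le> H1.nm f0 + H1.nm g" using H1.nm_triangle by simp
      also have "\<dots> \<le> K0 * H1.nm h + KQ * H1.nm h"
        using K0[of f0 h] KQ[OF c(2)] c(1) by (simp add: R0_iff add_mono)
      finally show ?thesis by (simp add: h_def algebra_simps)
    qed
  qed
qed

end

theorem theorem4p7:
  fixes scH :: "complex \<Rightarrow> 'h::ab_group_add \<Rightarrow> 'h" and ipH :: "'h \<Rightarrow> 'h \<Rightarrow> complex"
    and scG :: "complex \<Rightarrow> 'g::ab_group_add \<Rightarrow> 'g" and ipG :: "'g \<Rightarrow> 'g \<Rightarrow> complex"
    and S St T Tt :: "('h \<times> 'h) set"
    and \<Gamma>0 \<Gamma>1 \<Gamma>t0 \<Gamma>t1 :: "'h \<Rightarrow> 'g"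
    and B1 B2 :: "('g \<times> 'g) set"
    and z0 :: complex
  defines "A0 \<equiv> ker_restr T \<Gamma>0"
      and "At0 \<equiv> ker_restr Tt \<Gamma>t0"
      and "AB \<equiv> ext_B T \<Gamma>0 \<Gamma>1 B1 B2"
  assumes hilbH: "hilbert_space scH ipH" and sepH: "separable ipH"
      and hilbG: "hilbert_space scG ipG"
      \<comment> \<open>adjoint pair {S, St}\<close>
      and S_op: "lin_op scH scH S" "closed_op ipH ipH S" "densely_defined ipH S"
      and St_op: "lin_op scH scH St" "closed_op ipH ipH St" "densely_defined ipH St"
      and adj_pair: "\<forall>f u g v. (f, u) \<in> S \<longrightarrow> (g, v) \<in> St \<longrightarrow> ipH u g = ipH f v"
      \<comment> \<open>cores T of S*, Tt of St*\<close>
      and T_op: "lin_op scH scH T" "T \<subseteq> op_adj ipH ipH S" "op_closure ipH ipH T = op_adj ipH ipH S"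
      and Tt_op: "lin_op scH scH Tt" "Tt \<subseteq> op_adj ipH ipH St" "op_closure ipH ipH Tt = op_adj ipH ipH St"
      \<comment> \<open>linear boundary maps\<close>
      and lin_\<Gamma>: "lin_on scH scG (op_dom T) \<Gamma>0" "lin_on scH scG (op_dom T) \<Gamma>1"
      and lin_\<Gamma>t: "lin_on scH scG (op_dom Tt) \<Gamma>t0" "lin_on scH scG (op_dom Tt) \<Gamma>t1"
      \<comment> \<open>(G)\<close>
      and G: "\<forall>f u g v. (f, u) \<in> T \<longrightarrow> (g, v) \<in> Tt \<longrightarrow>
                 ipH u g - ipH f v = ipG (\<Gamma>1 f) (\<Gamma>t0 g) - ipG (\<Gamma>0 f) (\<Gamma>t1 g)"
      \<comment> \<open>(D)\<close>
      and D: "hdense ipG (\<Gamma>0 ` op_dom T)" "hdense ipG (\<Gamma>t0 ` op_dom Tt)"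
      \<comment> \<open>(M)\<close>
      and M: "op_adj ipH ipH A0 = At0" "op_adj ipH ipH At0 = A0"
      and rho_ne: "resolvent_set scH ipH A0 \<noteq> {}"
      and B_op: "lin_op scG scG B1" "closable ipG ipG B1" "lin_op scG scG B2" "closable ipG ipG B2"
      and z0: "z0 \<in> resolvent_set scH ipH A0"
      and MB1_closable: "closable ipG ipG (op_comp (weyl scH T \<Gamma>0 \<Gamma>1 z0) B1)"
      and i: "1 \<in> resolvent_set scG ipG
                (op_comp B2 (op_closure ipG ipG (op_comp (weyl scH T \<Gamma>0 \<Gamma>1 z0) B1)))"
      and ii: "op_ran (op_comp B2 (op_closure ipG ipG (op_comp (weyl scH T \<Gamma>0 \<Gamma>1 z0) B1)))
                 \<subseteq> \<Gamma>0 ` op_dom T \<inter> op_dom B1"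
      and iii: "op_ran (op_restrict B1 (\<Gamma>0 ` op_dom T)) \<subseteq> \<Gamma>0 ` op_dom T"
      and iv: "op_ran (op_restrict B2 (\<Gamma>1 ` op_dom T)) \<subseteq> \<Gamma>0 ` op_dom T"
      and v: "\<Gamma>1 ` op_dom A0 \<subseteq> op_dom (op_comp B1 B2)"
  shows "closed_op ipH ipH AB \<and> z0 \<in> resolvent_set scH ipH AB \<and>
    (\<forall>z \<in> resolvent_set scH ipH A0 \<inter> resolvent_set scH ipH AB.
       op_inv (op_shift scH AB z) =
       op_plus (op_inv (op_shift scH A0 z))
         (op_comp (gamma_field scH T \<Gamma>0 z)
           (op_comp B1
             (op_comp (op_inv (op_I_minus (op_comp B2 (op_comp (weyl scH T \<Gamma>0 \<Gamma>1 z) B1))))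
               (op_comp B2 (op_adj ipG ipH (gamma_field scH Tt \<Gamma>t0 (cnj z))))))))"
  proof -
  have st: "setting2 scH ipH scG ipG T Tt \<Gamma>0 \<Gamma>1 \<Gamma>t0 \<Gamma>t1 B1 B2 z0"
    unfolding setting2_def setting2_axioms_def setting_def setting_axioms_def hilb2_def hilb_def
    using hilbH hilbG T_op(1) Tt_op(1) lin_\<Gamma> lin_\<Gamma>t G D(2) M(1)[unfolded A0_def At0_def] B_op
      v[unfolded A0_def] z0[unfolded A0_def] MB1_closable i ii iii iv
    by blast
  interpret st: setting2 scH ipH scG ipG T Tt \<Gamma>0 \<Gamma>1 \<Gamma>t0 \<Gamma>t1 B1 B2 z0 by (rule st)
  show ?thesis
    unfolding A0_def AB_def
    using st.z0_res st.closed_from_res[OF st.z0_res] st.formula by blast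
qed

end
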